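(* Let $(M,H,g)$ be a 3-dimensional ts-oriented contact sub-Lorentzian manifold and $p\in M$. Then there is an oriented orthonormal frame $(X_1,X_2)$ near $p$ such that the matrix $h$ at $p$ takes one of the following forms: (1) if $\det h(p)=0$: $h(p)\in\left\{\begin{pmatrix}0&0\\0&0\end{pmatrix},\begin{pmatrix}1&\pm1\\ \mp1&-1\end{pmatrix},\begin{pmatrix}-1&\pm1\\ \mp1&1\end{pmatrix}\right\}$; (2) if $\det h(p)>0$: $h(p)=\begin{pmatrix}0&\chi\\-\chi&0\end{pmatrix}$ for some $\chi\neq0$; (3) if $\det h(p)<0$: $h(p)=\begin{pmatrix}\chi&0\\0&-\chi\end{pmatrix}$ for some $\chi\ne0$. Moreover, if $h(p)\neq0$, the value of such a frame at $p$ is unique.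
   Context: An oriented orthonormal frame is a local frame $(X_1,X_2)$ of $H$ with $g(X_1,X_1)=-1$, $g(X_1,X_2)=0$, $g(X_2,X_2)=1$, compatible with the time and space orientations; any two differ by $(X_1',X_2')=(\cosh t\,X_1+\sinh t\,X_2,\ \sinh t\,X_1+\cosh t\,X_2)$. With $\eta$ the contact form vanishing on $H$ and $\eta([X_2,X_1])=1$, $X_3$ is defined by $\eta(X_3)=-1$, $X_3\lrcorner d\eta=0$, and the structure functions by $[X_1,X_3]=cX_1+c^2_{13}X_2$, $[X_2,X_3]=c^1_{23}X_1-cX_2$, $[X_1,X_2]=c^1_{12}X_1+c^2_{12}X_2+X_3$. The matrix $h$ (computed in a given frame) is $h=\begin{pmatrix}c&\frac{c^2_{13}-c^1_{23}}2\\ \frac{c^1_{23}-c^2_{13}}2&-c\end{pmatrix}$; under change of frame it changes by conjugation by an element of $SO^+_{1,1}(\mathbb{R})=\{\begin{psmallmatrix}\cosh t&\sinh t\\ \sinh t&\cosh t\end{psmallmatrix}\}$. *)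

theory Defs
  imports "HOL-Analysis.Analysis"
begin

text \<open>Local model: a neighbourhood of p in the 3-manifold is an open set U of real^3
  (a chart). Vector fields are maps real^3 => real^3.\<close>

type_synonym R3 = "real^3"

fun iterD :: "R3 list \<Rightarrow> (R3 \<Rightarrow> 'a::real_normed_vector) \<Rightarrow> R3 \<Rightarrow> 'a" where
  "iterD [] f = f"
| "iterD (v # vs) f = (\<lambda>x. frechet_derivative (iterD vs f) (at x) v)"

definition smooth_on :: "R3 set \<Rightarrow> (R3 \<Rightarrow> 'a::real_normed_vector) \<Rightarrow> bool" where
  "smooth_on U f \<longleftrightarrow> (\<forall>vs x. x \<in> U \<longrightarrow> iterD vs f differentiable (at x))"

definition lie :: "(R3 \<Rightarrow> R3) \<Rightarrow> (R3 \<Rightarrow> R3) \<Rightarrow> R3 \<Rightarrow> R3" where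
  "lie X Y x = frechet_derivative Y (at x) (X x) - frechet_derivative X (at x) (Y x)"

definition lin_indep3 :: "R3 \<Rightarrow> R3 \<Rightarrow> R3 \<Rightarrow> bool" where
  "lin_indep3 u v w \<longleftrightarrow>
     (\<forall>a b c. a *\<^sub>R u + b *\<^sub>R v + c *\<^sub>R w = 0 \<longrightarrow> a = 0 \<and> b = 0 \<and> c = 0)"

definition coords :: "R3 \<Rightarrow> R3 \<Rightarrow> R3 \<Rightarrow> R3 \<Rightarrow> real \<times> real \<times> real" where
  "coords u v w z = (THE abc. z = fst abc *\<^sub>R u + fst (snd abc) *\<^sub>R v + snd (snd abc) *\<^sub>R w)"

text \<open>A 3-dimensional ts-oriented contact sub-Lorentzian structure on the open set U,
  given by a reference oriented orthonormal frame (Y1,Y2): H = span(Y1,Y2),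
  g(Y1,Y1) = -1, g(Y1,Y2) = 0, g(Y2,Y2) = 1, time orientation given by Y1, space
  orientation given by Y2; H is contact iff Y1, Y2, [Y1,Y2] are independent everywhere.\<close>
definition contact_subLorentzian :: "R3 set \<Rightarrow> (R3 \<Rightarrow> R3) \<Rightarrow> (R3 \<Rightarrow> R3) \<Rightarrow> bool" where
  "contact_subLorentzian U Y1 Y2 \<longleftrightarrow> open U \<and> smooth_on U Y1 \<and> smooth_on U Y2 \<and>
     (\<forall>x\<in>U. lin_indep3 (Y1 x) (Y2 x) (lie Y1 Y2 x))"

text \<open>Oriented orthonormal frame (X1,X2) of H defined on an open neighbourhood V \<subseteq> U:
  X1, X2 are smooth sections of H with g(X1,X1) = -1, g(X1,X2) = 0, g(X2,X2) = 1,
  X1 future directed (g(X1,Y1) < 0) and X2 in the positive space cone (g(X2,Y2) > 0).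
  Writing X1 = a Y1 + b Y2, X2 = c Y1 + d Y2 these conditions read as below.\<close>
definition oon_frame ::
  "R3 set \<Rightarrow> (R3 \<Rightarrow> R3) \<Rightarrow> (R3 \<Rightarrow> R3) \<Rightarrow> R3 set \<Rightarrow> (R3 \<Rightarrow> R3) \<Rightarrow> (R3 \<Rightarrow> R3) \<Rightarrow> bool" where
  "oon_frame U Y1 Y2 V X1 X2 \<longleftrightarrow> open V \<and> V \<subseteq> U \<and> smooth_on V X1 \<and> smooth_on V X2 \<and>
     (\<forall>x\<in>V. \<exists>a b c d. X1 x = a *\<^sub>R Y1 x + b *\<^sub>R Y2 x \<and> X2 x = c *\<^sub>R Y1 x + d *\<^sub>R Y2 x \<and>
        - a * a + b * b = -1 \<and> - a * c + b * d = 0 \<and> - c * c + d * d = 1 \<and>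
        - a < 0 \<and> d > 0)"

text \<open>The contact form eta: vanishes on H = span(X1,X2) and eta([X2,X1]) = 1.\<close>
definition eta :: "(R3 \<Rightarrow> R3) \<Rightarrow> (R3 \<Rightarrow> R3) \<Rightarrow> R3 \<Rightarrow> R3 \<Rightarrow> real" where
  "eta X1 X2 x z = snd (snd (coords (X1 x) (X2 x) (lie X2 X1 x) z))"

definition deta :: "(R3 \<Rightarrow> R3) \<Rightarrow> (R3 \<Rightarrow> R3) \<Rightarrow> (R3 \<Rightarrow> R3) \<Rightarrow> (R3 \<Rightarrow> R3) \<Rightarrow> R3 \<Rightarrow> real" where
  "deta X1 X2 A B x =
     frechet_derivative (\<lambda>y. eta X1 X2 y (B y)) (at x) (A x)
   - frechet_derivative (\<lambda>y. eta X1 X2 y (A y)) (at x) (B x)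
   - eta X1 X2 x (lie A B x)"

text \<open>X3 on V: eta(X3) = -1 and X3 \<lrcorner> d eta = 0 (d eta is a tensor and (X1,X2,X3) is
  a frame, so it suffices to test against X1, X2; d eta(X3,X3) = 0 trivially).
  X3 is normalised to 0 outside V so that it is uniquely determined.\<close>
definition X3of :: "R3 set \<Rightarrow> (R3 \<Rightarrow> R3) \<Rightarrow> (R3 \<Rightarrow> R3) \<Rightarrow> R3 \<Rightarrow> R3" where
  "X3of V X1 X2 = (THE X3. smooth_on V X3 \<and> (\<forall>x. x \<notin> V \<longrightarrow> X3 x = 0) \<and>
      (\<forall>x\<in>V. eta X1 X2 x (X3 x) = -1 \<and> deta X1 X2 X3 X1 x = 0 \<and> deta X1 X2 X3 X2 x = 0))"

definition mat2 :: "real \<Rightarrow> real \<Rightarrow> real \<Rightarrow> real \<Rightarrow> real^2^2" where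
  "mat2 a b c d = vector [vector [a, b], vector [c, d]]"

text \<open>Structure functions at x: [X1,X3] = c X1 + c13 X2, [X2,X3] = c23 X1 - c X2,
  and the matrix h.\<close>
definition hmat :: "R3 set \<Rightarrow> (R3 \<Rightarrow> R3) \<Rightarrow> (R3 \<Rightarrow> R3) \<Rightarrow> R3 \<Rightarrow> real^2^2" where
  "hmat V X1 X2 x =
     (let X3 = X3of V X1 X2;
          k13 = coords (X1 x) (X2 x) (X3 x) (lie X1 X3 x);
          k23 = coords (X1 x) (X2 x) (X3 x) (lie X2 X3 x);
          c = fst k13; c13_2 = fst (snd k13); c23_1 = fst k23
      in mat2 c ((c13_2 - c23_1) / 2) ((c23_1 - c13_2) / 2) (- c))"

definition normal_form :: "real^2^2 \<Rightarrow> bool" where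
  "normal_form h \<longleftrightarrow>
     (det h = 0 \<longrightarrow> h \<in> {mat2 0 0 0 0, mat2 1 1 (-1) (-1), mat2 1 (-1) 1 (-1),
                          mat2 (-1) 1 (-1) 1, mat2 (-1) (-1) 1 1}) \<and>
     (det h > 0 \<longrightarrow> (\<exists>k. k \<noteq> 0 \<and> h = mat2 0 k (-k) 0)) \<and>
     (det h < 0 \<longrightarrow> (\<exists>k. k \<noteq> 0 \<and> h = mat2 k 0 0 (-k)))"

end

theory Submission
  imports Defs
begin

lemma iterD_snoc: "iterD (vs @ [v]) f = iterD vs (\<lambda>x. frechet_derivative f (at x) v)"
  by (induction vs) auto

lemma has_derivative_cong_open:
  assumes "open S" "x \<in> S" "\<And>y. y \<in> S \<Longrightarrow> f y = g y"
  shows "(f has_derivative D) (at x) \<longleftrightarrow> (g has_derivative D) (at x)"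
proof
  assume "(f has_derivative D) (at x)" then show "(g has_derivative D) (at x)"
    using has_derivative_transform_within_open[OF _ assms(1,2)] assms(3) by metis
next
  assume "(g has_derivative D) (at x)" then show "(f has_derivative D) (at x)"
    using has_derivative_transform_within_open[OF _ assms(1,2)] assms(3) by metis
qed

lemma FD_cong_open:
  assumes "open S" "x \<in> S" "\<And>y. y \<in> S \<Longrightarrow> f y = g y"
  shows "frechet_derivative f (at x) = frechet_derivative g (at x)"
  unfolding frechet_derivative_def using has_derivative_cong_open[OF assms] by simp

lemma differentiable_cong_open:
  assumes "open S" "x \<in> S" "\<And>y. y \<in> S \<Longrightarrow> f y = g y"
  shows "f differentiable (at x) \<longleftrightarrow> g differentiable (at x)"
  unfolding differentiable_def using has_derivative_cong_open[OF assms] by simp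

lemma iterD_cong_open:
  assumes "open S" "\<And>y. y \<in> S \<Longrightarrow> f y = g y"
  shows "x \<in> S \<Longrightarrow> iterD vs f x = iterD vs g x"
proof (induction vs arbitrary: x)
  case Nil then show ?case using assms by simp
next
  case (Cons v vs)
  show ?case using FD_cong_open[OF assms(1) Cons.prems Cons.IH] by simp
qed

lemma smooth_on_cong:
  assumes "open S" "\<And>y. y \<in> S \<Longrightarrow> f y = g y"
  shows "smooth_on S f \<longleftrightarrow> smooth_on S g"
proof -
  have "x \<in> S \<Longrightarrow> iterD vs f differentiable (at x) \<longleftrightarrow> iterD vs g differentiable (at x)" for vs x
    using differentiable_cong_open[OF assms(1), of x "iterD vs f" "iterD vs g"] iterD_cong_open[of S f g, OF assms] by blast
  then show ?thesis unfolding smooth_on_def by blast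
qed

lemma smooth_on_subset: "smooth_on S f \<Longrightarrow> T \<subseteq> S \<Longrightarrow> smooth_on T f"
  unfolding smooth_on_def by blast

lemma smooth_on_differentiable: "smooth_on S f \<Longrightarrow> x \<in> S \<Longrightarrow> f differentiable (at x)"
  unfolding smooth_on_def using iterD.simps(1) by metis

lemma smooth_on_FD: "smooth_on S f \<Longrightarrow> smooth_on S (\<lambda>x. frechet_derivative f (at x) v)"
  unfolding smooth_on_def by (metis iterD_snoc)

lemma smooth_on_coinduct:
  assumes "open S"
    and step: "\<And>f. P f \<Longrightarrow> (\<forall>x\<in>S. f differentiable (at x)) \<and>
                 (\<forall>v. \<exists>g. P g \<and> (\<forall>x\<in>S. frechet_derivative f (at x) v = g x))"
    and "P f"
  shows "smooth_on S f"
proof -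
  have "\<forall>f. P f \<longrightarrow> (\<forall>x\<in>S. iterD vs f differentiable (at x))" for vs
  proof (induction vs rule: rev_induct)
    case Nil then show ?case using step by simp
  next
    case (snoc v ws)
    show ?case
    proof (intro allI impI ballI)
      fix f x assume "P f" "x \<in> S"
      obtain g where g: "P g" "\<forall>x\<in>S. frechet_derivative f (at x) v = g x" using step[OF \<open>P f\<close>] by blast
      have "iterD ws g differentiable (at x)" using snoc g \<open>x\<in>S\<close> by blast
      moreover have "\<And>y. y \<in> S \<Longrightarrow> iterD ws g y = iterD ws (\<lambda>x. frechet_derivative f (at x) v) y"
        using iterD_cong_open[OF assms(1), of g "\<lambda>x. frechet_derivative f (at x) v"] g by metis
      ultimately show "iterD (ws @ [v]) f differentiable (at x)"
        unfolding iterD_snoc using differentiable_cong_open[OF assms(1) \<open>x\<in>S\<close>] by blast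
    qed
  qed
  then show ?thesis unfolding smooth_on_def using assms(3) by blast
qed

lemma smooth_on_const: "open S \<Longrightarrow> smooth_on S (\<lambda>x. c)"
  by (rule smooth_on_coinduct[where P="\<lambda>f. \<exists>c. f = (\<lambda>x. c)"]) auto

lemma smooth_on_linear:
  assumes "open S" "bounded_linear L" "smooth_on S f"
  shows "smooth_on S (\<lambda>x. L (f x))"
proof (rule smooth_on_coinduct[where P="\<lambda>h. \<exists>f. smooth_on S f \<and> h = (\<lambda>x. L (f x))"])
  fix h assume "\<exists>f. smooth_on S f \<and> h = (\<lambda>x. L (f x))"
  then obtain f where f: "smooth_on S f" "h = (\<lambda>x. L (f x))" by blast
  have d: "((\<lambda>x. L (f x)) has_derivative (\<lambda>v. L (frechet_derivative f (at x) v))) (at x)" if "x \<in> S" for x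
    using bounded_linear.has_derivative[OF assms(2) frechet_derivative_works[THEN iffD1, OF smooth_on_differentiable[OF f(1) that]]] .
  show "(\<forall>x\<in>S. h differentiable (at x)) \<and>
          (\<forall>v. \<exists>g. (\<exists>f. smooth_on S f \<and> g = (\<lambda>x. L (f x))) \<and> (\<forall>x\<in>S. frechet_derivative h (at x) v = g x))"
  proof (intro conjI allI ballI exI)
    fix x assume "x \<in> S" then show "h differentiable (at x)" using d f(2) differentiableI by blast
  next
    fix v x assume "x \<in> S"
    show "frechet_derivative h (at x) v = L (frechet_derivative f (at x) v)"
      using frechet_derivative_at[OF d[OF \<open>x\<in>S\<close>]] f(2) by metis
  next
    fix v show "smooth_on S (\<lambda>x. frechet_derivative f (at x) v)" by (rule smooth_on_FD[OF f(1)])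
  qed simp
qed (use assms in auto)

definition spsum :: "((R3 \<Rightarrow> real) \<times> (R3 \<Rightarrow> 'a::real_normed_vector)) list \<Rightarrow> R3 \<Rightarrow> 'a" where
  "spsum ps x = (\<Sum>(f,g)\<leftarrow>ps. f x *\<^sub>R g x)"

lemma spsum_Nil[simp]: "spsum [] = (\<lambda>x. 0)" by (auto simp: spsum_def)
lemma spsum_Cons[simp]: "spsum ((f,g)#ps) = (\<lambda>x. f x *\<^sub>R g x + spsum ps x)" by (auto simp: spsum_def)
lemma spsum_append[simp]: "spsum (ps @ qs) x = spsum ps x + spsum qs x" by (auto simp: spsum_def)

lemma spsum_has_derivative:
  assumes "\<forall>(f,g)\<in>set ps. f differentiable (at x) \<and> g differentiable (at x)"
  shows "(spsum ps has_derivative (\<lambda>v. spsum (map (\<lambda>(f,g). (\<lambda>y. frechet_derivative f (at y) v, g)) ps) x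
           + spsum (map (\<lambda>(f,g). (f, \<lambda>y. frechet_derivative g (at y) v)) ps) x)) (at x)"
  using assms
proof (induction ps)
  case Nil then show ?case by simp
next
  case (Cons p ps)
  obtain f g where p: "p = (f,g)" by (cases p)
  have df: "(f has_derivative frechet_derivative f (at x)) (at x)" and dg: "(g has_derivative frechet_derivative g (at x)) (at x)"
    using Cons.prems p frechet_derivative_works by auto
  have "((\<lambda>x. f x *\<^sub>R g x + spsum ps x) has_derivative
     (\<lambda>v. (f x *\<^sub>R frechet_derivative g (at x) v + frechet_derivative f (at x) v *\<^sub>R g x) +
        (spsum (map (\<lambda>(f,g). (\<lambda>y. frechet_derivative f (at y) v, g)) ps) x
           + spsum (map (\<lambda>(f,g). (f, \<lambda>y. frechet_derivative g (at y) v)) ps) x))) (at x)"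
    by (intro has_derivative_add has_derivative_scaleR df dg Cons.IH) (use Cons.prems in auto)
  then show ?case using p by (simp add: algebra_simps)
qed

lemma smooth_on_spsum:
  assumes "open S" "\<forall>(f,g)\<in>set ps. smooth_on S f \<and> smooth_on S g"
  shows "smooth_on S (spsum ps)"
proof (rule smooth_on_coinduct[where P="\<lambda>h. \<exists>ps. (\<forall>(f,g)\<in>set ps. smooth_on S f \<and> smooth_on S g) \<and> (\<forall>x\<in>S. h x = spsum ps x)"])
  fix h assume "\<exists>ps. (\<forall>(f,g)\<in>set ps. smooth_on S f \<and> smooth_on S g) \<and> (\<forall>x\<in>S. h x = spsum ps x)"
  then obtain ps where ps: "\<forall>(f,g)\<in>set ps. smooth_on S f \<and> smooth_on S g" "\<forall>x\<in>S. h x = spsum ps x" by blast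
  have dif: "\<forall>(f,g)\<in>set ps. f differentiable (at x) \<and> g differentiable (at x)" if "x \<in> S" for x
    using ps(1) that by (auto intro: smooth_on_differentiable)
  have fd: "frechet_derivative h (at x) = frechet_derivative (spsum ps) (at x)" if "x \<in> S" for x
    using FD_cong_open[OF assms(1) that, of h "spsum ps"] ps(2) by blast
  show "(\<forall>x\<in>S. h differentiable (at x)) \<and>
        (\<forall>v. \<exists>g. (\<exists>ps. (\<forall>(f,g)\<in>set ps. smooth_on S f \<and> smooth_on S g) \<and> (\<forall>x\<in>S. g x = spsum ps x)) \<and>
          (\<forall>x\<in>S. frechet_derivative h (at x) v = g x))"
  proof (intro conjI allI ballI)
    fix x assume "x \<in> S"
    then show "h differentiable (at x)"
      using differentiable_cong_open[OF assms(1) \<open>x\<in>S\<close>, of h "spsum ps"] ps(2) spsum_has_derivative[OF dif] differentiableI by blast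
  next
    fix v
    let ?qs = "map (\<lambda>(f,g). (\<lambda>y. frechet_derivative f (at y) v, g)) ps @ map (\<lambda>(f,g). (f, \<lambda>y. frechet_derivative g (at y) v)) ps"
    show "\<exists>g. (\<exists>ps. (\<forall>(f,g)\<in>set ps. smooth_on S f \<and> smooth_on S g) \<and> (\<forall>x\<in>S. g x = spsum ps x)) \<and>
          (\<forall>x\<in>S. frechet_derivative h (at x) v = g x)"
    proof (rule exI[where x="spsum ?qs"], intro conjI ballI)
      show "\<exists>ps. (\<forall>(f,g)\<in>set ps. smooth_on S f \<and> smooth_on S g) \<and> (\<forall>x\<in>S. spsum ?qs x = spsum ps x)"
      proof (rule exI[where x="?qs"], intro conjI)
      show "\<forall>(f,g)\<in>set ?qs. smooth_on S f \<and> smooth_on S g" 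
      proof (auto)
        fix a b assume "(a,b) \<in> set ps"
        then have "smooth_on S a" "smooth_on S b" using ps(1) by auto
        then show "smooth_on S (\<lambda>y. frechet_derivative a (at y) v)" "smooth_on S (\<lambda>y. frechet_derivative b (at y) v)"
          by (auto intro: smooth_on_FD)
      qed (use ps(1) in auto)
      qed simp
      fix x assume "x \<in> S"
      show "frechet_derivative h (at x) v = spsum ?qs x"
      proof -
        note eq = frechet_derivative_at[OF spsum_has_derivative[OF dif[OF \<open>x\<in>S\<close>]]]
        show ?thesis unfolding fd[OF \<open>x\<in>S\<close>] eq[symmetric] by simp
      qed
    qed
  qed
qed (use assms in auto)

lemma smooth_on_scaleR:
  assumes "open S" "smooth_on S f" "smooth_on S g"
  shows "smooth_on S (\<lambda>x. f x *\<^sub>R g x)"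
  using smooth_on_spsum[OF assms(1), of "[(f,g)]"] assms by simp

lemma smooth_on_mult:
  fixes f g :: "R3 \<Rightarrow> real"
  assumes "open S" "smooth_on S f" "smooth_on S g"
  shows "smooth_on S (\<lambda>x. f x * g x)"
  using smooth_on_scaleR[OF assms] by simp

lemma smooth_on_add:
  assumes "open S" "smooth_on S f" "smooth_on S g"
  shows "smooth_on S (\<lambda>x. f x + g x)"
  using smooth_on_spsum[OF assms(1), of "[(\<lambda>x. 1, f), (\<lambda>x. 1, g)]"] assms smooth_on_const[OF assms(1)] by auto

lemma smooth_on_minus:
  assumes "open S" "smooth_on S f"
  shows "smooth_on S (\<lambda>x. - f x)"
  using smooth_on_spsum[OF assms(1), of "[(\<lambda>x. -1, f)]"] assms smooth_on_const[OF assms(1)] by auto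

lemma smooth_on_diff:
  assumes "open S" "smooth_on S f" "smooth_on S g"
  shows "smooth_on S (\<lambda>x. f x - g x)"
  using smooth_on_add[OF assms(1,2) smooth_on_minus[OF assms(1,3)]] by simp

lemma smooth_on_sum:
  assumes "open S" "finite I" "\<And>i. i \<in> I \<Longrightarrow> smooth_on S (f i)"
  shows "smooth_on S (\<lambda>x. \<Sum>i\<in>I. f i x)"
  using assms(2,3)
proof (induction I rule: finite_induct)
  case empty then show ?case using smooth_on_const[OF assms(1)] by simp
next
  case (insert i I)
  then show ?case using smooth_on_add[OF assms(1), of "f i" "\<lambda>x. \<Sum>i\<in>I. f i x"] by simp
qed

definition ipsum :: "(R3 \<Rightarrow> real) \<Rightarrow> ((R3 \<Rightarrow> real) \<times> nat) list \<Rightarrow> R3 \<Rightarrow> real" where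
  "ipsum f ps x = (\<Sum>(g,k)\<leftarrow>ps. g x * inverse (f x) ^ k)"

lemma ipsum_Nil[simp]: "ipsum f [] = (\<lambda>x. 0)" by (auto simp: ipsum_def)
lemma ipsum_Cons[simp]: "ipsum f ((g,k)#ps) = (\<lambda>x. g x * inverse (f x) ^ k + ipsum f ps x)" by (auto simp: ipsum_def)
lemma ipsum_append[simp]: "ipsum f (ps @ qs) x = ipsum f ps x + ipsum f qs x" by (auto simp: ipsum_def)

lemma inv_pow_aux: "real k * (i ^ (k - 1) * (i * d * i)) = real k * d * (i::real) ^ (k + 1)"
  by (cases k) (auto simp: algebra_simps)

lemma ipsum_has_derivative:
  assumes "\<forall>(g,k)\<in>set ps. g differentiable (at x)" "f differentiable (at x)" "f x \<noteq> 0"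
  shows "(ipsum f ps has_derivative (\<lambda>v. ipsum f (map (\<lambda>(g,k). (\<lambda>y. frechet_derivative g (at y) v, k)) ps) x
           + ipsum f (map (\<lambda>(g,k). (\<lambda>y. - real k * g y * frechet_derivative f (at y) v, k + 1)) ps) x)) (at x)"
  using assms(1)
proof (induction ps)
  case Nil then show ?case by simp
next
  case (Cons p ps)
  obtain g k where p: "p = (g,k)" by (cases p)
  have dg: "(g has_derivative frechet_derivative g (at x)) (at x)"
    using Cons.prems p frechet_derivative_works by auto
  have df: "(f has_derivative frechet_derivative f (at x)) (at x)"
    using assms(2) frechet_derivative_works by auto
  have "((\<lambda>x. g x * inverse (f x) ^ k + ipsum f ps x) has_derivative
     (\<lambda>v. (g x * (real k * (- (inverse (f x) * frechet_derivative f (at x) v * inverse (f x))) * inverse (f x) ^ (k - 1))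
          + frechet_derivative g (at x) v * inverse (f x) ^ k) +
        (ipsum f (map (\<lambda>(g,k). (\<lambda>y. frechet_derivative g (at y) v, k)) ps) x
           + ipsum f (map (\<lambda>(g,k). (\<lambda>y. - real k * g y * frechet_derivative f (at y) v, k + 1)) ps) x))) (at x)"
    using Cons.prems by (intro has_derivative_add[OF has_derivative_mult[OF dg has_derivative_power[OF Deriv.has_derivative_inverse[OF assms(3) df]]] Cons.IH]) auto
  moreover have e: "g x * (real k * (- (inverse (f x) * d * inverse (f x))) * inverse (f x) ^ (k - 1))
     = - real k * g x * d * inverse (f x) ^ (k + 1)" for d
      by (cases k) (auto simp: algebra_simps)
  ultimately show ?case unfolding p ipsum_Cons[of f g k ps]
    by (elim has_derivative_eq_rhs) (cases k, auto simp: fun_eq_iff algebra_simps)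
qed

lemma smooth_on_ipsum:
  assumes "open S" "smooth_on S f" "\<forall>x\<in>S. f x \<noteq> 0" "\<forall>(g,k)\<in>set ps. smooth_on S g"
  shows "smooth_on S (ipsum f ps)"
proof (rule smooth_on_coinduct[where P="\<lambda>h. \<exists>ps. (\<forall>(g,k)\<in>set ps. smooth_on S g) \<and> (\<forall>x\<in>S. h x = ipsum f ps x)"])
  fix h assume "\<exists>ps. (\<forall>(g,k)\<in>set ps. smooth_on S g) \<and> (\<forall>x\<in>S. h x = ipsum f ps x)"
  then obtain ps where ps: "\<forall>(g,k)\<in>set ps. smooth_on S g" "\<forall>x\<in>S. h x = ipsum f ps x" by blast
  have dif: "\<forall>(g,k)\<in>set ps. g differentiable (at x)" if "x \<in> S" for x
    using ps(1) that by (auto intro: smooth_on_differentiable)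
  have dfx: "f differentiable (at x)" "f x \<noteq> 0" if "x \<in> S" for x
    using smooth_on_differentiable[OF assms(2) that] assms(3) that by auto
  have fd: "frechet_derivative h (at x) = frechet_derivative (ipsum f ps) (at x)" if "x \<in> S" for x
    using FD_cong_open[OF assms(1) that, of h "ipsum f ps"] ps(2) by blast
  show "(\<forall>x\<in>S. h differentiable (at x)) \<and>
        (\<forall>v. \<exists>g. (\<exists>ps. (\<forall>(g,k)\<in>set ps. smooth_on S g) \<and> (\<forall>x\<in>S. g x = ipsum f ps x)) \<and>
          (\<forall>x\<in>S. frechet_derivative h (at x) v = g x))"
  proof (intro conjI allI ballI)
    fix x assume "x \<in> S"
    then show "h differentiable (at x)"
      using differentiable_cong_open[OF assms(1) \<open>x\<in>S\<close>, of h "ipsum f ps"] ps(2)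
        ipsum_has_derivative[OF dif dfx] differentiableI by blast
  next
    fix v
    let ?qs = "map (\<lambda>(g,k). (\<lambda>y. frechet_derivative g (at y) v, k)) ps @ map (\<lambda>(g,k). (\<lambda>y. - real k * g y * frechet_derivative f (at y) v, k + 1)) ps"
    show "\<exists>g. (\<exists>ps. (\<forall>(g,k)\<in>set ps. smooth_on S g) \<and> (\<forall>x\<in>S. g x = ipsum f ps x)) \<and>
          (\<forall>x\<in>S. frechet_derivative h (at x) v = g x)"
    proof (rule exI[where x="ipsum f ?qs"], intro conjI ballI)
      show "\<exists>ps. (\<forall>(g,k)\<in>set ps. smooth_on S g) \<and> (\<forall>x\<in>S. ipsum f ?qs x = ipsum f ps x)"
      proof (rule exI[where x="?qs"], intro conjI)
        show "\<forall>(g,k)\<in>set ?qs. smooth_on S g"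
        proof (auto)
          fix a k assume "(a,k) \<in> set ps"
          then have a: "smooth_on S a" using ps(1) by auto
          then show "smooth_on S (\<lambda>y. frechet_derivative a (at y) v)" by (auto intro: smooth_on_FD)
          show "smooth_on S (\<lambda>y. - (real k * a y * frechet_derivative f (at y) v))"
            by (intro smooth_on_minus smooth_on_mult smooth_on_const smooth_on_FD assms a)
        qed
      qed simp
      fix x assume "x \<in> S"
      show "frechet_derivative h (at x) v = ipsum f ?qs x"
      proof -
        note eq = frechet_derivative_at[OF ipsum_has_derivative[OF dif[OF \<open>x\<in>S\<close>] dfx[OF \<open>x\<in>S\<close>]]]
        show ?thesis unfolding fd[OF \<open>x\<in>S\<close>] eq[symmetric] by simp
      qed
    qed
  qed
qed (use assms in auto)

lemma smooth_on_inverse: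
  fixes f :: "R3 \<Rightarrow> real"
  assumes "open S" "smooth_on S f" "\<forall>x\<in>S. f x \<noteq> 0"
  shows "smooth_on S (\<lambda>x. inverse (f x))"
  using smooth_on_ipsum[OF assms, of "[(\<lambda>x. 1, 1)]"] smooth_on_const[OF assms(1), of 1] by simp

lemma smooth_on_divide:
  fixes f g :: "R3 \<Rightarrow> real"
  assumes "open S" "smooth_on S g" "smooth_on S f" "\<forall>x\<in>S. f x \<noteq> 0"
  shows "smooth_on S (\<lambda>x. g x / f x)"
  using smooth_on_mult[OF assms(1,2) smooth_on_inverse[OF assms(1,3,4)]] by (simp add: divide_inverse)

definition det3 :: "R3 \<Rightarrow> R3 \<Rightarrow> R3 \<Rightarrow> real" where
  "det3 u v w = u$1*(v$2*w$3 - v$3*w$2) - u$2*(v$1*w$3 - v$3*w$1) + u$3*(v$1*w$2 - v$2*w$1)"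

lemma lin_indep3_det3:
  assumes "lin_indep3 u v w" shows "det3 u v w \<noteq> 0"
proof -
  define f where "f = (\<lambda>x::real^3. (x$1) *\<^sub>R u + (x$2) *\<^sub>R v + (x$3) *\<^sub>R w)"
  have lin: "linear f" unfolding f_def
    by (rule linearI) (simp_all add: algebra_simps)
  have "inj f"
  proof (rule injI)
    fix x y assume "f x = f y"
    then have "(x$1 - y$1) *\<^sub>R u + (x$2 - y$2) *\<^sub>R v + (x$3 - y$3) *\<^sub>R w = 0"
      unfolding f_def by (simp add: algebra_simps)
    then have "x$1 - y$1 = 0 \<and> x$2 - y$2 = 0 \<and> x$3 - y$3 = 0"
      using assms unfolding lin_indep3_def by blast
    then show "x = y" by (simp add: vec_eq_iff forall_3)
  qed
  then have "det (matrix f) \<noteq> 0" using det_nz_iff_inj[OF lin] by simp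
  moreover have "det (matrix f) = det3 u v w"
    unfolding det_3 matrix_def f_def det3_def by (simp add: axis_def algebra_simps)
  ultimately show ?thesis by simp
qed

lemma cramer:
  assumes "det3 u v w \<noteq> 0"
  shows "z = (det3 z v w / det3 u v w) *\<^sub>R u + (det3 u z w / det3 u v w) *\<^sub>R v + (det3 u v z / det3 u v w) *\<^sub>R w"
proof -
  have "det3 u v w *\<^sub>R z = det3 z v w *\<^sub>R u + det3 u z w *\<^sub>R v + det3 u v z *\<^sub>R w"
    unfolding det3_def by (simp add: vec_eq_iff forall_3 algebra_simps)
  moreover have "z = (1 / det3 u v w) *\<^sub>R (det3 u v w *\<^sub>R z)" using assms by simp
  ultimately have "z = (1 / det3 u v w) *\<^sub>R (det3 z v w *\<^sub>R u + det3 u z w *\<^sub>R v + det3 u v z *\<^sub>R w)"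
    by simp
  then show ?thesis by (simp add: scaleR_add_right)
qed

lemma coords_unique:
  assumes "lin_indep3 u v w" "z = a *\<^sub>R u + b *\<^sub>R v + c *\<^sub>R w"
  shows "coords u v w z = (a, b, c)"
  unfolding coords_def
proof (rule the_equality)
  show "z = fst (a, b, c) *\<^sub>R u + fst (snd (a, b, c)) *\<^sub>R v + snd (snd (a, b, c)) *\<^sub>R w" using assms by simp
next
  fix abc assume h: "z = fst abc *\<^sub>R u + fst (snd abc) *\<^sub>R v + snd (snd abc) *\<^sub>R w"
  obtain a' b' c' where abc: "abc = (a',b',c')" by (cases abc) auto
  have "(a' - a) *\<^sub>R u + (b' - b) *\<^sub>R v + (c' - c) *\<^sub>R w = 0"
    using h assms(2) unfolding abc by (simp add: algebra_simps)
  then have "a' - a = 0 \<and> b' - b = 0 \<and> c' - c = 0" using assms(1) unfolding lin_indep3_def by blast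
  then show "abc = (a, b, c)" using abc by simp
qed

lemma coords_cramer:
  assumes "lin_indep3 u v w"
  shows "coords u v w z = (det3 z v w / det3 u v w, det3 u z w / det3 u v w, det3 u v z / det3 u v w)"
  using coords_unique[OF assms cramer[OF lin_indep3_det3[OF assms]]] .

lemma det3_lin_indep3:
  assumes "det3 u v w \<noteq> 0" shows "lin_indep3 u v w"
  unfolding lin_indep3_def
proof (intro allI impI)
  fix a b c assume h: "a *\<^sub>R u + b *\<^sub>R v + c *\<^sub>R w = 0"
  have "det3 (a *\<^sub>R u + b *\<^sub>R v + c *\<^sub>R w) v w = a * det3 u v w"
       "det3 u (a *\<^sub>R u + b *\<^sub>R v + c *\<^sub>R w) w = b * det3 u v w"
       "det3 u v (a *\<^sub>R u + b *\<^sub>R v + c *\<^sub>R w) = c * det3 u v w"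
    unfolding det3_def by (simp_all add: algebra_simps)
  then show "a = 0 \<and> b = 0 \<and> c = 0" using h assms by (simp add: det3_def)
qed

lemma coords_exists:
  assumes "lin_indep3 u v w"
  shows "z = fst (coords u v w z) *\<^sub>R u + fst (snd (coords u v w z)) *\<^sub>R v + snd (snd (coords u v w z)) *\<^sub>R w"
  using cramer[OF lin_indep3_det3[OF assms]] coords_cramer[OF assms] by simp

lemma FDw: "f differentiable (at x) \<Longrightarrow> (f has_derivative frechet_derivative f (at x)) (at x)"
  using frechet_derivative_works by blast

lemma FD_linear: "f differentiable (at x) \<Longrightarrow> linear (frechet_derivative f (at x))"
  by (rule linear_frechet_derivative)

lemma FD_add:
  "f differentiable (at x) \<Longrightarrow> g differentiable (at x) \<Longrightarrow>
   frechet_derivative (\<lambda>y. f y + g y) (at x) v = frechet_derivative f (at x) v + frechet_derivative g (at x) v"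
  by (subst frechet_derivative_at[OF has_derivative_add[OF FDw FDw], symmetric]) auto

lemma FD_diff:
  "f differentiable (at x) \<Longrightarrow> g differentiable (at x) \<Longrightarrow>
   frechet_derivative (\<lambda>y. f y - g y) (at x) v = frechet_derivative f (at x) v - frechet_derivative g (at x) v"
  by (subst frechet_derivative_at[OF has_derivative_diff[OF FDw FDw], symmetric]) auto

lemma FD_minus:
  "f differentiable (at x) \<Longrightarrow>
   frechet_derivative (\<lambda>y. - f y) (at x) v = - frechet_derivative f (at x) v"
  by (subst frechet_derivative_at[OF has_derivative_minus[OF FDw], symmetric]) auto

lemma FD_scaleR:
  fixes f :: "R3 \<Rightarrow> real"
  shows "f differentiable (at x) \<Longrightarrow> g differentiable (at x) \<Longrightarrow>
   frechet_derivative (\<lambda>y. f y *\<^sub>R g y) (at x) v = frechet_derivative f (at x) v *\<^sub>R g x + f x *\<^sub>R frechet_derivative g (at x) v"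
  by (subst frechet_derivative_at[OF has_derivative_scaleR[OF FDw FDw], symmetric]) auto

lemma FD_mult:
  fixes f g :: "R3 \<Rightarrow> real"
  shows "f differentiable (at x) \<Longrightarrow> g differentiable (at x) \<Longrightarrow>
   frechet_derivative (\<lambda>y. f y * g y) (at x) v = frechet_derivative f (at x) v * g x + f x * frechet_derivative g (at x) v"
  using FD_scaleR[of f x g v] by simp

lemma FD_bl:
  "bounded_linear L \<Longrightarrow> f differentiable (at x) \<Longrightarrow>
   frechet_derivative (\<lambda>y. L (f y)) (at x) v = L (frechet_derivative f (at x) v)"
  by (subst frechet_derivative_at[OF bounded_linear.has_derivative[OF _ FDw], symmetric]) auto

lemma FD_sum:
  "finite I \<Longrightarrow> (\<And>i. i \<in> I \<Longrightarrow> f i differentiable (at x)) \<Longrightarrow>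
   frechet_derivative (\<lambda>y. \<Sum>i\<in>I. f i y) (at x) v = (\<Sum>i\<in>I. frechet_derivative (f i) (at x) v)"
  by (subst frechet_derivative_at[OF has_derivative_sum[OF FDw, of I f x], symmetric]) auto

lemma differentiable_sum':
  "finite I \<Longrightarrow> (\<And>i. i \<in> I \<Longrightarrow> f i differentiable (at x)) \<Longrightarrow> (\<lambda>y. \<Sum>i\<in>I. f i y) differentiable (at x)"
  using has_derivative_sum[OF FDw, of I f x] differentiableI by blast

lemma FD_const_open:
  assumes "open S" "x \<in> S" "\<And>y. y \<in> S \<Longrightarrow> f y = c"
  shows "frechet_derivative f (at x) v = 0"
  using FD_cong_open[OF assms(1,2), of f "\<lambda>y. c"] assms(3) by simp

lemma linear_basis_expand:
  fixes L :: "'a::euclidean_space \<Rightarrow> 'b::real_vector"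
  assumes "linear L" shows "L z = (\<Sum>b\<in>Basis. (z \<bullet> b) *\<^sub>R L b)"
proof -
  have "L z = L (\<Sum>b\<in>Basis. (z \<bullet> b) *\<^sub>R b)" by (simp add: euclidean_representation)
  also have "\<dots> = (\<Sum>b\<in>Basis. (z \<bullet> b) *\<^sub>R L b)"
    using assms by (simp add: linear_sum linear_scale)
  finally show ?thesis .
qed

lemma bl_inner_left: "bounded_linear (\<lambda>z::'a::real_inner. z \<bullet> b)"
  by (rule bounded_linear_inner_left)

lemma smooth_on_lie:
  assumes "open S" "smooth_on S X" "smooth_on S Y"
  shows "smooth_on S (lie X Y)"
proof -
  define G where "G = (\<lambda>y. (\<Sum>b\<in>Basis. (X y \<bullet> b) *\<^sub>R frechet_derivative Y (at y) b)
        - (\<Sum>b\<in>Basis. (Y y \<bullet> b) *\<^sub>R frechet_derivative X (at y) b))"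
  have eq: "lie X Y y = G y" if "y \<in> S" for y
  proof -
    have dX: "X differentiable (at y)" and dY: "Y differentiable (at y)"
      using smooth_on_differentiable assms(2,3) that by blast+
    show ?thesis unfolding lie_def G_def
      linear_basis_expand[OF FD_linear[OF dY], of "X y"] linear_basis_expand[OF FD_linear[OF dX], of "Y y"] ..
  qed
  have "smooth_on S G" unfolding G_def
    by (intro smooth_on_diff smooth_on_sum smooth_on_scaleR smooth_on_linear[OF _ bl_inner_left]
        smooth_on_FD assms finite_Basis)
  then show ?thesis using smooth_on_cong[OF assms(1) eq] by simp
qed

lemma smooth_on_det3:
  assumes "open S" "smooth_on S u" "smooth_on S v" "smooth_on S w"
  shows "smooth_on S (\<lambda>x. det3 (u x) (v x) (w x))"
  unfolding det3_def
  by (intro smooth_on_add smooth_on_diff smooth_on_mult smooth_on_linear[OF _ bounded_linear_vec_nth] assms)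

lemma differentiable_det3:
  fixes u v w :: "R3 \<Rightarrow> R3"
  assumes "u differentiable (at x)" "v differentiable (at x)" "w differentiable (at x)"
  shows "(\<lambda>x. det3 (u x) (v x) (w x)) differentiable (at x)"
proof -
  have c: "(\<lambda>x. f x $ i) differentiable (at x)" if "f differentiable (at x)" for f :: "R3 \<Rightarrow> R3" and i
    using bounded_linear.has_derivative[OF bounded_linear_vec_nth FDw[OF that]] differentiableI by blast
  show ?thesis unfolding det3_def
    by (intro differentiable_add differentiable_diff differentiable_mult c[OF assms(1)] c[OF assms(2)] c[OF assms(3)])
qed

lemma lie_cong_open:
  assumes "open S" "x \<in> S" "\<And>y. y \<in> S \<Longrightarrow> X y = X' y" "\<And>y. y \<in> S \<Longrightarrow> Y y = Y' y"
  shows "lie X Y x = lie X' Y' x"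
proof -
  have "frechet_derivative X (at x) = frechet_derivative X' (at x)" "frechet_derivative Y (at x) = frechet_derivative Y' (at x)"
    using FD_cong_open[OF assms(1,2)] assms(3,4) by blast+
  then show ?thesis unfolding lie_def using assms(2-4) by simp
qed

lemma lie_self: "lie X X x = 0" by (simp add: lie_def)

lemma lie_antisym: "lie X Y x = - lie Y X x" by (simp add: lie_def)

lemma lie_add_left:
  assumes "X differentiable (at x)" "X' differentiable (at x)" "Y differentiable (at x)"
  shows "lie (\<lambda>y. X y + X' y) Y x = lie X Y x + lie X' Y x"
  unfolding lie_def FD_add[OF assms(1,2)] linear_add[OF FD_linear[OF assms(3)]] by (simp add: algebra_simps)

lemma lie_add_right:
  assumes "X differentiable (at x)" "Y differentiable (at x)" "Y' differentiable (at x)"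
  shows "lie X (\<lambda>y. Y y + Y' y) x = lie X Y x + lie X Y' x"
  unfolding lie_def FD_add[OF assms(2,3)] linear_add[OF FD_linear[OF assms(1)]] by (simp add: algebra_simps)

lemma lie_minus_left:
  assumes "X differentiable (at x)" "Y differentiable (at x)"
  shows "lie (\<lambda>y. - X y) Y x = - lie X Y x"
  unfolding lie_def FD_minus[OF assms(1)] linear_neg[OF FD_linear[OF assms(2)]] by (simp add: algebra_simps)

lemma lie_minus_right:
  assumes "X differentiable (at x)" "Y differentiable (at x)"
  shows "lie X (\<lambda>y. - Y y) x = - lie X Y x"
  unfolding lie_def FD_minus[OF assms(2)] linear_neg[OF FD_linear[OF assms(1)]] by (simp add: algebra_simps)

lemma lie_scale_left:
  fixes f :: "R3 \<Rightarrow> real"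
  assumes "f differentiable (at x)" "X differentiable (at x)" "Y differentiable (at x)"
  shows "lie (\<lambda>y. f y *\<^sub>R X y) Y x = f x *\<^sub>R lie X Y x - frechet_derivative f (at x) (Y x) *\<^sub>R X x"
  unfolding lie_def FD_scaleR[OF assms(1,2)] linear_scale[OF FD_linear[OF assms(3)]] by (simp add: algebra_simps)

lemma lie_scale_right:
  fixes f :: "R3 \<Rightarrow> real"
  assumes "f differentiable (at x)" "X differentiable (at x)" "Y differentiable (at x)"
  shows "lie X (\<lambda>y. f y *\<^sub>R Y y) x = f x *\<^sub>R lie X Y x + frechet_derivative f (at x) (X x) *\<^sub>R Y x"
  unfolding lie_def FD_scaleR[OF assms(1,3)] linear_scale[OF FD_linear[OF assms(2)]] by (simp add: algebra_simps)

lemma mvt_line: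
  fixes h :: "R3 \<Rightarrow> real"
  assumes "0 < t" "\<And>s. 0 \<le> s \<Longrightarrow> s \<le> t \<Longrightarrow> h differentiable (at (a + s *\<^sub>R u))"
  shows "\<exists>\<xi>. 0 < \<xi> \<and> \<xi> < t \<and> h (a + t *\<^sub>R u) - h a = t * frechet_derivative h (at (a + \<xi> *\<^sub>R u)) u"
proof -
  have d: "((\<lambda>s. h (a + s *\<^sub>R u)) has_derivative (\<lambda>d. frechet_derivative h (at (a + s *\<^sub>R u)) (d *\<^sub>R u))) (at s within {0..t})"
    if "0 \<le> s" "s \<le> t" for s
  proof -
    have "((\<lambda>s. a + s *\<^sub>R u) has_derivative (\<lambda>d. d *\<^sub>R u)) (at s within {0..t})"
      by (auto intro!: derivative_eq_intros)
    then show ?thesis using has_derivative_compose FDw[OF assms(2)[OF that]] by blast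
  qed
  obtain \<xi> where "\<xi> \<in> {0<..<t}" "h (a + t *\<^sub>R u) - h (a + 0 *\<^sub>R u) = frechet_derivative h (at (a + \<xi> *\<^sub>R u)) ((t - 0) *\<^sub>R u)"
    using mvt_simple[OF assms(1) d] by blast
  moreover have "frechet_derivative h (at (a + \<xi> *\<^sub>R u)) ((t - 0) *\<^sub>R u) = t * frechet_derivative h (at (a + \<xi> *\<^sub>R u)) u"
    using linear_scale[OF FD_linear[OF assms(2)]] \<open>\<xi> \<in> {0<..<t}\<close> by simp
  ultimately show ?thesis by auto
qed

lemma schwarz_real:
  fixes f :: "R3 \<Rightarrow> real"
  assumes S: "open S" "smooth_on S f" "p \<in> S"
  shows "frechet_derivative (\<lambda>y. frechet_derivative f (at y) v) (at p) w
       = frechet_derivative (\<lambda>y. frechet_derivative f (at y) w) (at p) v"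
proof -
  define gv where "gv = (\<lambda>y. frechet_derivative f (at y) v)"
  define gw where "gw = (\<lambda>y. frechet_derivative f (at y) w)"
  define k where "k = (\<lambda>y. frechet_derivative gv (at y) w)"
  define k' where "k' = (\<lambda>y. frechet_derivative gw (at y) v)"
  have sgv: "smooth_on S gv" and sgw: "smooth_on S gw" unfolding gv_def gw_def using smooth_on_FD[OF S(2)] by auto
  have sk: "smooth_on S k" and sk': "smooth_on S k'" unfolding k_def k'_def using smooth_on_FD sgv sgw by auto
  have ck: "continuous (at p) k" and ck': "continuous (at p) k'"
    using differentiable_imp_continuous_within smooth_on_differentiable[OF sk S(3)] smooth_on_differentiable[OF sk' S(3)] by blast+
  obtain r where r: "r > 0" "ball p r \<subseteq> S" using S(1,3) open_contains_ball by blast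
  define C where "C = norm v + norm w + 1"
  have C: "C > 0" unfolding C_def by (simp add: add_nonneg_pos)
  have inS: "p + a *\<^sub>R v + b *\<^sub>R w \<in> S" if "0 \<le> a" "a \<le> t" "0 \<le> b" "b \<le> t" "t * C < r" for a b t
  proof -
    have "norm (a *\<^sub>R v + b *\<^sub>R w) \<le> a * norm v + b * norm w"
      using norm_triangle_ineq[of "a *\<^sub>R v" "b *\<^sub>R w"] that by simp
    also have "\<dots> \<le> t * norm v + t * norm w" using that by (intro add_mono mult_right_mono) auto
    also have "\<dots> \<le> t * C" unfolding C_def using that by (simp add: algebra_simps)
    finally have "dist (p + a *\<^sub>R v + b *\<^sub>R w) p < r" using that by (simp add: dist_norm add.assoc)
    then show ?thesis using r(2) by (auto simp: dist_commute)
  qed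
  have close: "dist (p + a *\<^sub>R v + b *\<^sub>R w) p \<le> t * C" if "0 \<le> a" "a \<le> t" "0 \<le> b" "b \<le> t" for a b t
  proof -
    have "norm (a *\<^sub>R v + b *\<^sub>R w) \<le> a * norm v + b * norm w"
      using norm_triangle_ineq[of "a *\<^sub>R v" "b *\<^sub>R w"] that by simp
    also have "\<dots> \<le> t * norm v + t * norm w" using that by (intro add_mono mult_right_mono) auto
    also have "\<dots> \<le> t * C" unfolding C_def using that by (simp add: algebra_simps)
    finally show ?thesis by (simp add: dist_norm add.assoc)
  qed
  have key: "\<exists>q. dist q p \<le> t * C \<and>
     f (p + t *\<^sub>R v + t *\<^sub>R w) - f (p + t *\<^sub>R v) - f (p + t *\<^sub>R w) + f p = t * t * frechet_derivative (\<lambda>y. frechet_derivative f (at y) v) (at q) w"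
    if "0 < t" "t * C < r" "open S" "smooth_on S f" "\<And>a b. 0 \<le> a \<Longrightarrow> a \<le> t \<Longrightarrow> 0 \<le> b \<Longrightarrow> b \<le> t \<Longrightarrow> p + a *\<^sub>R v + b *\<^sub>R w \<in> S"
         "\<And>a b. 0 \<le> a \<Longrightarrow> a \<le> t \<Longrightarrow> 0 \<le> b \<Longrightarrow> b \<le> t \<Longrightarrow> dist (p + a *\<^sub>R v + b *\<^sub>R w) p \<le> t * C"
    for t v w and f :: "R3 \<Rightarrow> real"
  proof -
    note inS' = that(5) and close' = that(6) and sf = that(4)
    define H where "H = (\<lambda>y. f (y + t *\<^sub>R w) - f y)"
    have dH: "H differentiable (at (p + s *\<^sub>R v))" and FDH: "frechet_derivative H (at (p + s *\<^sub>R v)) v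
         = frechet_derivative f (at (p + s *\<^sub>R v + t *\<^sub>R w)) v - frechet_derivative f (at (p + s *\<^sub>R v)) v"
      if "0 \<le> s" "s \<le> t" for s
    proof -
      have d1: "f differentiable (at (p + s *\<^sub>R v + t *\<^sub>R w))" using smooth_on_differentiable[OF sf] inS'[of s t] \<open>0<t\<close> \<open>0\<le>s\<close> \<open>s\<le>t\<close> by auto
      have d0: "f differentiable (at (p + s *\<^sub>R v))" using smooth_on_differentiable[OF \<open>smooth_on S f\<close>] inS'[of s 0] \<open>0<t\<close> that by auto
      have "((\<lambda>y. f (y + t *\<^sub>R w)) has_derivative (\<lambda>d. frechet_derivative f (at (p + s *\<^sub>R v + t *\<^sub>R w)) d)) (at (p + s *\<^sub>R v))"
        using has_derivative_compose[OF has_derivative_add[OF has_derivative_ident has_derivative_const] FDw[OF d1]] by simp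
      then have hd: "(H has_derivative (\<lambda>d. frechet_derivative f (at (p + s *\<^sub>R v + t *\<^sub>R w)) d - frechet_derivative f (at (p + s *\<^sub>R v)) d)) (at (p + s *\<^sub>R v))"
        unfolding H_def by (intro has_derivative_diff FDw[OF d0])
      show "H differentiable (at (p + s *\<^sub>R v))" using hd differentiableI by blast
      show "frechet_derivative H (at (p + s *\<^sub>R v)) v = frechet_derivative f (at (p + s *\<^sub>R v + t *\<^sub>R w)) v - frechet_derivative f (at (p + s *\<^sub>R v)) v"
        using frechet_derivative_at[OF hd] by metis
    qed
    obtain \<xi> where \<xi>: "0 < \<xi>" "\<xi> < t" "H (p + t *\<^sub>R v) - H p = t * frechet_derivative H (at (p + \<xi> *\<^sub>R v)) v"
      using mvt_line[OF \<open>0<t\<close>, of H p v] dH by auto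
    define g where "g = (\<lambda>y. frechet_derivative f (at y) v)"
    have sg: "smooth_on S g" unfolding g_def using smooth_on_FD[OF sf] .
    obtain \<eta> where \<eta>: "0 < \<eta>" "\<eta> < t" "g ((p + \<xi> *\<^sub>R v) + t *\<^sub>R w) - g (p + \<xi> *\<^sub>R v) = t * frechet_derivative g (at ((p + \<xi> *\<^sub>R v) + \<eta> *\<^sub>R w)) w"
      using mvt_line[OF \<open>0<t\<close>, of g "p + \<xi> *\<^sub>R v" w] smooth_on_differentiable[OF sg] inS'[of \<xi>] \<xi> by auto
    show ?thesis
    proof (intro exI conjI)
      show "dist (p + \<xi> *\<^sub>R v + \<eta> *\<^sub>R w) p \<le> t * C" using close' \<xi> \<eta> by auto
      have "f (p + t *\<^sub>R v + t *\<^sub>R w) - f (p + t *\<^sub>R v) - f (p + t *\<^sub>R w) + f p = H (p + t *\<^sub>R v) - H p"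
        unfolding H_def by simp
      also have "\<dots> = t * (g ((p + \<xi> *\<^sub>R v) + t *\<^sub>R w) - g (p + \<xi> *\<^sub>R v))"
        using \<xi>(3) FDH[of \<xi>] \<xi> unfolding g_def by simp
      also have "\<dots> = t * t * frechet_derivative g (at (p + \<xi> *\<^sub>R v + \<eta> *\<^sub>R w)) w" using \<eta>(3) by simp
      finally show "f (p + t *\<^sub>R v + t *\<^sub>R w) - f (p + t *\<^sub>R v) - f (p + t *\<^sub>R w) + f p =
         t * t * frechet_derivative (\<lambda>y. frechet_derivative f (at y) v) (at (p + \<xi> *\<^sub>R v + \<eta> *\<^sub>R w)) w"
        unfolding g_def .
    qed
  qed
  show ?thesis
  proof (rule ccontr)
    assume "\<not> ?thesis"
    then have ne: "frechet_derivative gv (at p) w \<noteq> frechet_derivative gw (at p) v" unfolding gv_def gw_def .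
    define e where "e = \<bar>k p - k' p\<bar> / 2"
    have e: "e > 0" unfolding e_def k_def k'_def using ne by simp
    obtain d1 where d1: "d1 > 0" "\<And>q. dist q p < d1 \<Longrightarrow> dist (k q) (k p) < e"
      using ck e unfolding continuous_at_eps_delta by blast
    obtain d2 where d2: "d2 > 0" "\<And>q. dist q p < d2 \<Longrightarrow> dist (k' q) (k' p) < e"
      using ck' e unfolding continuous_at_eps_delta by blast
    define t where "t = min (min d1 d2) r / (2 * C)"
    have t: "0 < t" "t * C < r" "t * C < d1" "t * C < d2"
      unfolding t_def using C r d1 d2 by (auto simp: field_simps min_def)
    obtain q1 where q1: "dist q1 p \<le> t * C"
      "f (p + t *\<^sub>R v + t *\<^sub>R w) - f (p + t *\<^sub>R v) - f (p + t *\<^sub>R w) + f p = t * t * k q1"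
    proof -
      have "\<And>a b. 0 \<le> a \<Longrightarrow> a \<le> t \<Longrightarrow> 0 \<le> b \<Longrightarrow> b \<le> t \<Longrightarrow> p + a *\<^sub>R v + b *\<^sub>R w \<in> S"
        using inS t by blast
      moreover have "\<And>a b. 0 \<le> a \<Longrightarrow> a \<le> t \<Longrightarrow> 0 \<le> b \<Longrightarrow> b \<le> t \<Longrightarrow> dist (p + a *\<^sub>R v + b *\<^sub>R w) p \<le> t * C"
        using close by blast
      ultimately show ?thesis using key[OF t(1,2) S(1,2), of v w] that unfolding k_def gv_def by blast
    qed
    obtain q2 where q2: "dist q2 p \<le> t * C"
      "f (p + t *\<^sub>R w + t *\<^sub>R v) - f (p + t *\<^sub>R w) - f (p + t *\<^sub>R v) + f p = t * t * k' q2"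
    proof -
      have sw: "p + a *\<^sub>R w + b *\<^sub>R v = p + b *\<^sub>R v + a *\<^sub>R w" for a b by (simp add: algebra_simps)
      have "\<And>a b. 0 \<le> a \<Longrightarrow> a \<le> t \<Longrightarrow> 0 \<le> b \<Longrightarrow> b \<le> t \<Longrightarrow> p + a *\<^sub>R w + b *\<^sub>R v \<in> S"
        unfolding sw using inS t(2) by blast
      moreover have "\<And>a b. 0 \<le> a \<Longrightarrow> a \<le> t \<Longrightarrow> 0 \<le> b \<Longrightarrow> b \<le> t \<Longrightarrow> dist (p + a *\<^sub>R w + b *\<^sub>R v) p \<le> t * C"
        unfolding sw using close by blast
      ultimately show ?thesis using key[OF t(1,2) S(1,2), of w v] that unfolding k'_def gw_def by blast
    qed
    have "f (p + t *\<^sub>R w + t *\<^sub>R v) = f (p + t *\<^sub>R v + t *\<^sub>R w)" by (simp add: algebra_simps)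
    then have "t * t * k q1 = t * t * k' q2" using q1(2) q2(2) by linarith
    then have kq: "k q1 = k' q2" using t(1) by simp
    have "dist (k q1) (k p) < e" using d1(2) q1(1) t(3) by simp
    moreover have "dist (k' q2) (k' p) < e" using d2(2) q2(1) t(4) by simp
    ultimately have "\<bar>k p - k' p\<bar> < 2 * e" using kq unfolding dist_real_def by linarith
    then show False unfolding e_def by simp
  qed
qed

lemma FD_nth:
  fixes f :: "R3 \<Rightarrow> R3"
  shows "f differentiable (at x) \<Longrightarrow> frechet_derivative (\<lambda>y. f y $ i) (at x) v = frechet_derivative f (at x) v $ i"
  using FD_bl[OF bounded_linear_vec_nth] by blast

lemma schwarz_vec:
  fixes Y :: "R3 \<Rightarrow> R3"
  assumes S: "open S" "smooth_on S Y" "p \<in> S"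
  shows "frechet_derivative (\<lambda>y. frechet_derivative Y (at y) v) (at p) w
       = frechet_derivative (\<lambda>y. frechet_derivative Y (at y) w) (at p) v"
proof -
  have comp: "frechet_derivative (\<lambda>y. frechet_derivative Y (at y) v) (at p) w $ i
      = frechet_derivative (\<lambda>y. frechet_derivative (\<lambda>z. Y z $ i) (at y) v) (at p) w" for i v w
  proof -
    have "frechet_derivative (\<lambda>y. frechet_derivative Y (at y) v) (at p) w $ i
        = frechet_derivative (\<lambda>y. frechet_derivative Y (at y) v $ i) (at p) w"
      by (simp add: FD_nth[OF smooth_on_differentiable[OF smooth_on_FD[OF S(2)] S(3)]])
    also have "\<dots> = frechet_derivative (\<lambda>y. frechet_derivative (\<lambda>z. Y z $ i) (at y) v) (at p) w"
    proof -
      have "\<And>y. y \<in> S \<Longrightarrow> frechet_derivative Y (at y) v $ i = frechet_derivative (\<lambda>z. Y z $ i) (at y) v"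
        using FD_nth[OF smooth_on_differentiable[OF S(2)]] by simp
      from FD_cong_open[OF S(1,3) this] show ?thesis by simp
    qed
    finally show ?thesis .
  qed
  have si: "smooth_on S (\<lambda>z. Y z $ i)" for i using smooth_on_linear[OF S(1) bounded_linear_vec_nth S(2)] .
  show ?thesis unfolding vec_eq_iff comp by (intro allI) (rule schwarz_real[OF S(1) si S(3)])
qed

definition D2 :: "(R3 \<Rightarrow> R3) \<Rightarrow> R3 \<Rightarrow> R3 \<Rightarrow> R3 \<Rightarrow> R3" where
  "D2 Y p w u = frechet_derivative (\<lambda>y. frechet_derivative Y (at y) u) (at p) w"

lemma D2_sym: "open S \<Longrightarrow> smooth_on S Y \<Longrightarrow> p \<in> S \<Longrightarrow> D2 Y p w u = D2 Y p u w"
  unfolding D2_def by (rule schwarz_vec)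

lemma D2_linear: assumes "open S" "smooth_on S Y" "p \<in> S" shows "linear (D2 Y p w)"
proof -
  have "D2 Y p w = frechet_derivative (\<lambda>y. frechet_derivative Y (at y) w) (at p)"
    by (intro ext) (subst D2_sym[OF assms], simp add: D2_def)
  then show ?thesis using FD_linear[OF smooth_on_differentiable[OF smooth_on_FD[OF assms(2)] assms(3)]] by simp
qed

lemma FD_apply:
  fixes X Y :: "R3 \<Rightarrow> R3"
  assumes S: "open S" "smooth_on S X" "smooth_on S Y" "p \<in> S"
  shows "(\<lambda>y. frechet_derivative Y (at y) (X y)) differentiable (at p)"
    and "frechet_derivative (\<lambda>y. frechet_derivative Y (at y) (X y)) (at p) w
         = D2 Y p w (X p) + frechet_derivative Y (at p) (frechet_derivative X (at p) w)"
proof -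
  define G where "G = (\<lambda>y. \<Sum>b\<in>Basis. (X y \<bullet> b) *\<^sub>R frechet_derivative Y (at y) b)"
  have eq: "frechet_derivative Y (at y) (X y) = G y" if "y \<in> S" for y
    unfolding G_def using linear_basis_expand[OF FD_linear[OF smooth_on_differentiable[OF S(3) that]]] .
  have sG: "smooth_on S G" unfolding G_def
    by (intro smooth_on_sum smooth_on_scaleR smooth_on_linear[OF _ bl_inner_left] smooth_on_FD S finite_Basis)
  have dG: "G differentiable (at p)" using smooth_on_differentiable[OF sG S(4)] .
  show "(\<lambda>y. frechet_derivative Y (at y) (X y)) differentiable (at p)"
    using differentiable_cong_open[OF S(1,4), of "\<lambda>y. frechet_derivative Y (at y) (X y)" G] eq dG by blast
  have dXb: "(\<lambda>y. X y \<bullet> b) differentiable (at p)" for b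
    using smooth_on_differentiable[OF smooth_on_linear[OF S(1) bl_inner_left S(2)] S(4)] .
  have dYb: "(\<lambda>y. frechet_derivative Y (at y) b) differentiable (at p)" for b
    using smooth_on_differentiable[OF smooth_on_FD[OF S(3)] S(4)] .
  have "frechet_derivative (\<lambda>y. frechet_derivative Y (at y) (X y)) (at p) w = frechet_derivative G (at p) w"
    using FD_cong_open[OF S(1,4), of "\<lambda>y. frechet_derivative Y (at y) (X y)" G] eq by simp
  also have "\<dots> = (\<Sum>b\<in>Basis. frechet_derivative (\<lambda>y. (X y \<bullet> b) *\<^sub>R frechet_derivative Y (at y) b) (at p) w)"
    unfolding G_def by (rule FD_sum) (auto intro: differentiable_scaleR dXb dYb)
  also have "\<dots> = (\<Sum>b\<in>Basis. (frechet_derivative X (at p) w \<bullet> b) *\<^sub>R frechet_derivative Y (at p) b + (X p \<bullet> b) *\<^sub>R D2 Y p w b)"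
  proof (rule sum.cong[OF refl])
    fix b :: R3
    show "frechet_derivative (\<lambda>y. (X y \<bullet> b) *\<^sub>R frechet_derivative Y (at y) b) (at p) w =
      (frechet_derivative X (at p) w \<bullet> b) *\<^sub>R frechet_derivative Y (at p) b + (X p \<bullet> b) *\<^sub>R D2 Y p w b"
      unfolding FD_scaleR[OF dXb dYb] D2_def
      using FD_bl[OF bl_inner_left smooth_on_differentiable[OF S(2,4)], of b w] by simp
  qed
  also have "\<dots> = frechet_derivative Y (at p) (frechet_derivative X (at p) w) + D2 Y p w (X p)"
    unfolding sum.distrib
      linear_basis_expand[OF FD_linear[OF smooth_on_differentiable[OF S(3,4)]], of "frechet_derivative X (at p) w", symmetric]
      using linear_basis_expand[OF D2_linear[OF S(1,3,4)], of w "X p"] by simp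
  finally show "frechet_derivative (\<lambda>y. frechet_derivative Y (at y) (X y)) (at p) w
         = D2 Y p w (X p) + frechet_derivative Y (at p) (frechet_derivative X (at p) w)" by simp
qed

lemma FD_lie:
  fixes X Y :: "R3 \<Rightarrow> R3"
  assumes S: "open S" "smooth_on S X" "smooth_on S Y" "p \<in> S"
  shows "frechet_derivative (lie X Y) (at p) w
     = D2 Y p w (X p) + frechet_derivative Y (at p) (frechet_derivative X (at p) w)
     - D2 X p w (Y p) - frechet_derivative X (at p) (frechet_derivative Y (at p) w)"
proof -
  have "lie X Y = (\<lambda>y. frechet_derivative Y (at y) (X y) - frechet_derivative X (at y) (Y y))"
    unfolding lie_def by (rule ext) simp
  then show ?thesis using FD_diff[OF FD_apply(1)[OF S] FD_apply(1)[OF S(1,3,2,4)]]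
    FD_apply(2)[OF S] FD_apply(2)[OF S(1,3,2,4)] by (simp add: algebra_simps)
qed

lemma jacobi:
  fixes X Y W :: "R3 \<Rightarrow> R3"
  assumes S: "open S" "smooth_on S X" "smooth_on S Y" "smooth_on S W" "p \<in> S"
  shows "lie (lie X Y) W p + lie (lie Y W) X p + lie (lie W X) Y p = 0"
proof -
  note lX = FD_linear[OF smooth_on_differentiable[OF S(2,5)]]
  note lY = FD_linear[OF smooth_on_differentiable[OF S(3,5)]]
  note lW = FD_linear[OF smooth_on_differentiable[OF S(4,5)]]
  have s1: "D2 Y p (W p) (X p) = D2 Y p (X p) (W p)" using D2_sym[OF S(1,3,5)] .
  have s2: "D2 X p (W p) (Y p) = D2 X p (Y p) (W p)" using D2_sym[OF S(1,2,5)] .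
  have s3: "D2 W p (X p) (Y p) = D2 W p (Y p) (X p)" using D2_sym[OF S(1,4,5)] .
  show ?thesis
    unfolding lie_def[of "lie X Y"] lie_def[of "lie Y W"] lie_def[of "lie W X"]
      FD_lie[OF S(1,2,3,5)] FD_lie[OF S(1,3,4,5)] FD_lie[OF S(1,4,2,5)]
    unfolding lie_def linear_diff[OF lX] linear_diff[OF lY] linear_diff[OF lW] s1 s2 s3
    by (simp add: algebra_simps)
qed

lemma lie_comb:
  fixes f1 g1 f2 g2 :: "R3 \<Rightarrow> real" and A B :: "R3 \<Rightarrow> R3"
  assumes d: "f1 differentiable (at x)" "g1 differentiable (at x)" "f2 differentiable (at x)" "g2 differentiable (at x)"
    "A differentiable (at x)" "B differentiable (at x)"
  shows "lie (\<lambda>y. f1 y *\<^sub>R A y + g1 y *\<^sub>R B y) (\<lambda>y. f2 y *\<^sub>R A y + g2 y *\<^sub>R B y) x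
    = (f1 x * g2 x - g1 x * f2 x) *\<^sub>R lie A B x
    + (f1 x * frechet_derivative f2 (at x) (A x) + g1 x * frechet_derivative f2 (at x) (B x)
       - f2 x * frechet_derivative f1 (at x) (A x) - g2 x * frechet_derivative f1 (at x) (B x)) *\<^sub>R A x
    + (f1 x * frechet_derivative g2 (at x) (A x) + g1 x * frechet_derivative g2 (at x) (B x)
       - f2 x * frechet_derivative g1 (at x) (A x) - g2 x * frechet_derivative g1 (at x) (B x)) *\<^sub>R B x"
proof -
  have dfA: "(\<lambda>y. f y *\<^sub>R C y) differentiable (at x)" if "f differentiable (at x)" "C differentiable (at x)"
    for f :: "R3 \<Rightarrow> real" and C :: "R3 \<Rightarrow> R3" using differentiable_scaleR[OF that] .
  have dY: "(\<lambda>y. f2 y *\<^sub>R A y + g2 y *\<^sub>R B y) differentiable (at x)"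
    by (intro differentiable_add dfA d)
  have l1: "lie (\<lambda>y. f1 y *\<^sub>R A y + g1 y *\<^sub>R B y) (\<lambda>y. f2 y *\<^sub>R A y + g2 y *\<^sub>R B y) x
     = lie (\<lambda>y. f1 y *\<^sub>R A y) (\<lambda>y. f2 y *\<^sub>R A y + g2 y *\<^sub>R B y) x + lie (\<lambda>y. g1 y *\<^sub>R B y) (\<lambda>y. f2 y *\<^sub>R A y + g2 y *\<^sub>R B y) x"
    by (rule lie_add_left[OF dfA[OF d(1,5)] dfA[OF d(2,6)] dY])
  have lA: "lie A (\<lambda>y. f2 y *\<^sub>R A y + g2 y *\<^sub>R B y) x = frechet_derivative f2 (at x) (A x) *\<^sub>R A x
      + g2 x *\<^sub>R lie A B x + frechet_derivative g2 (at x) (A x) *\<^sub>R B x"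
    unfolding lie_add_right[OF d(5) dfA[OF d(3,5)] dfA[OF d(4,6)]] lie_scale_right[OF d(3,5,5)] lie_scale_right[OF d(4,5,6)]
    by (simp add: lie_self)
  have lB: "lie B (\<lambda>y. f2 y *\<^sub>R A y + g2 y *\<^sub>R B y) x = - f2 x *\<^sub>R lie A B x + frechet_derivative f2 (at x) (B x) *\<^sub>R A x
      + frechet_derivative g2 (at x) (B x) *\<^sub>R B x"
    unfolding lie_add_right[OF d(6) dfA[OF d(3,5)] dfA[OF d(4,6)]] lie_scale_right[OF d(3,6,5)] lie_scale_right[OF d(4,6,6)]
    by (simp add: lie_self lie_antisym[of B A])
  have lin: "frechet_derivative f (at x) (f2 x *\<^sub>R A x + g2 x *\<^sub>R B x) = f2 x * frechet_derivative f (at x) (A x) + g2 x * frechet_derivative f (at x) (B x)"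
    if "f differentiable (at x)" for f :: "R3 \<Rightarrow> real"
    using linear_add[OF FD_linear[OF that]] linear_scale[OF FD_linear[OF that]] by simp
  show ?thesis
    unfolding l1 lie_scale_left[OF d(1,5) dY] lie_scale_left[OF d(2,6) dY] lA lB lin[OF d(1)] lin[OF d(2)]
    by (simp add: algebra_simps)
qed

lemma ab_unique:
  fixes a b c d :: real
  assumes "- a * a + b * b = -1" "- a * c + b * d = 0" "- c * c + d * d = 1" "- a < 0" "d > 0"
  shows "c = b \<and> d = a"
proof -
  have a2: "a * a = 1 + b * b" and d2: "d * d = 1 + c * c" using assms by auto
  have "a * c = b * d" using assms(2) by simp
  then have cc: "c * c = b * b" using a2 d2 by algebra
  then have "d * d = a * a" using a2 d2 by simp
  then have da: "d = a" using assms(4,5) by (metis abs_of_pos abs_real_def mult_minus_left mult_minus_right neg_less_0_iff_less real_sqrt_abs2 real_sqrt_mult_self)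
  then have "a * c = a * b" using \<open>a * c = b * d\<close> by simp
  then have "c = b" using assms(4) by simp
  then show ?thesis using da by simp
qed

lemma lin_indep3_neg3: "lin_indep3 u v w \<Longrightarrow> lin_indep3 u v (- w)"
  unfolding lin_indep3_def by (metis add.inverse_neutral neg_equal_iff_equal scaleR_minus_left scaleR_minus_right)

lemma det3_add3: "det3 u v (z + z') = det3 u v z + det3 u v z'"
  and det3_scale3: "det3 u v (c *\<^sub>R z) = c * det3 u v z"
  and det3_u: "det3 u v u = 0" and det3_v: "det3 u v v = 0"
  and det3_neg3: "det3 u v (- z) = - det3 u v z"
  and det3_diff3: "det3 u v (z - z') = det3 u v z - det3 u v z'"
  by (simp_all add: det3_def algebra_simps)

lemma differentiable_divide':
  fixes f g :: "R3 \<Rightarrow> real"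
  shows "f differentiable (at x) \<Longrightarrow> g differentiable (at x) \<Longrightarrow> g x \<noteq> 0 \<Longrightarrow> (\<lambda>y. f y / g y) differentiable (at x)"
  using differentiable_divide by blast

locale CSL =
  fixes U :: "R3 set" and Y1 Y2 :: "R3 \<Rightarrow> R3"
  assumes csl: "contact_subLorentzian U Y1 Y2"
begin

lemma opU: "open U" and smY1: "smooth_on U Y1" and smY2: "smooth_on U Y2"
  and indep12: "x \<in> U \<Longrightarrow> lin_indep3 (Y1 x) (Y2 x) (lie Y1 Y2 x)"
  using csl unfolding contact_subLorentzian_def by auto

definition Z where "Z = lie Y2 Y1"

lemma smZ: "smooth_on U Z" unfolding Z_def by (rule smooth_on_lie[OF opU smY2 smY1])

lemma Z_neg: "lie Y1 Y2 x = - Z x" unfolding Z_def using lie_antisym by metis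

lemma indepZ: "x \<in> U \<Longrightarrow> lin_indep3 (Y1 x) (Y2 x) (Z x)"
  using lin_indep3_neg3[OF indep12] Z_neg by (metis minus_minus)

definition dY where "dY x = det3 (Y1 x) (Y2 x) (Z x)"

lemma dY_nz: "x \<in> U \<Longrightarrow> dY x \<noteq> 0" unfolding dY_def using lin_indep3_det3 indepZ by blast

definition et where "et x z = det3 (Y1 x) (Y2 x) z / dY x"

lemma eta_et: "x \<in> U \<Longrightarrow> eta Y1 Y2 x z = et x z"
  unfolding eta_def et_def dY_def Z_def[symmetric] using coords_cramer[OF indepZ] by simp

lemma et_add: "et x (z + z') = et x z + et x z'" and et_scale: "et x (c *\<^sub>R z) = c * et x z"
  and et_neg: "et x (- z) = - et x z" and et_diff: "et x (z - z') = et x z - et x z'"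
  and et_zero: "et x 0 = 0"
  unfolding et_def by (simp_all add: det3_def algebra_simps add_divide_distrib diff_divide_distrib)

lemma et_Y1: "et x (Y1 x) = 0" and et_Y2: "et x (Y2 x) = 0"
  unfolding et_def by (simp_all add: det3_u det3_v)

lemma et_Z: "x \<in> U \<Longrightarrow> et x (Z x) = 1" unfolding et_def dY_def[symmetric] using dY_nz by simp

lemma sm_diff: "smooth_on U f \<Longrightarrow> x \<in> U \<Longrightarrow> f differentiable (at x)" by (rule smooth_on_differentiable)

lemma smdY: "smooth_on U dY" unfolding dY_def by (intro smooth_on_det3 opU smY1 smY2 smZ)

lemma sm_et: "smooth_on U W \<Longrightarrow> smooth_on U (\<lambda>x. et x (W x))"
  unfolding et_def using dY_nz by (intro smooth_on_divide smooth_on_det3 opU smY1 smY2 smdY) auto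

definition \<alpha> where "\<alpha> x = - et x (lie Z Y2 x)"
definition \<beta> where "\<beta> x = et x (lie Z Y1 x)"
definition R where "R x = (- Z x + \<alpha> x *\<^sub>R Y1 x) + \<beta> x *\<^sub>R Y2 x"

lemma sm\<alpha>: "smooth_on U \<alpha>" unfolding \<alpha>_def by (intro smooth_on_minus opU sm_et smooth_on_lie smZ smY2)
lemma sm\<beta>: "smooth_on U \<beta>" unfolding \<beta>_def by (intro sm_et smooth_on_lie opU smZ smY1)
lemma smR: "smooth_on U R" unfolding R_def
  by (intro smooth_on_add smooth_on_minus smooth_on_scaleR opU smZ sm\<alpha> sm\<beta> smY1 smY2)

lemma et_R: "x \<in> U \<Longrightarrow> et x (R x) = -1"
  unfolding R_def by (simp add: et_add et_scale et_neg et_diff et_Y1 et_Y2 et_Z)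

lemma lie_R_left:
  assumes "x \<in> U" "T differentiable (at x)"
  shows "lie R T x = - lie Z T x + (\<alpha> x *\<^sub>R lie Y1 T x - frechet_derivative \<alpha> (at x) (T x) *\<^sub>R Y1 x)
                   + (\<beta> x *\<^sub>R lie Y2 T x - frechet_derivative \<beta> (at x) (T x) *\<^sub>R Y2 x)"
proof -
  note dZ = sm_diff[OF smZ assms(1)] and d1 = sm_diff[OF smY1 assms(1)] and d2 = sm_diff[OF smY2 assms(1)]
    and da = sm_diff[OF sm\<alpha> assms(1)] and db = sm_diff[OF sm\<beta> assms(1)]
  have R': "R = (\<lambda>y. (\<lambda>y. - Z y + \<alpha> y *\<^sub>R Y1 y) y + \<beta> y *\<^sub>R Y2 y)" unfolding R_def by simp
  have dA: "(\<lambda>y. - Z y + \<alpha> y *\<^sub>R Y1 y) differentiable (at x)"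
    by (intro differentiable_add differentiable_minus differentiable_scaleR dZ da d1)
  show ?thesis unfolding R'
    lie_add_left[OF dA differentiable_scaleR[OF db d2] assms(2)]
    lie_add_left[OF differentiable_minus[OF dZ] differentiable_scaleR[OF da d1] assms(2)]
    lie_minus_left[OF dZ assms(2)] lie_scale_left[OF da d1 assms(2)] lie_scale_left[OF db d2 assms(2)] ..
qed

lemma et_lie_R_Y1: "x \<in> U \<Longrightarrow> et x (lie R Y1 x) = 0"
  using lie_R_left[OF _ sm_diff[OF smY1]]
  by (simp add: et_add et_scale et_neg et_diff et_Y1 et_Y2 et_Z lie_self Z_def[symmetric] \<beta>_def)

lemma et_lie_R_Y2: "x \<in> U \<Longrightarrow> et x (lie R Y2 x) = 0"
  using lie_R_left[OF _ sm_diff[OF smY2]]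
  by (simp add: et_add et_scale et_neg et_diff et_Y1 et_Y2 et_Z lie_self Z_neg \<alpha>_def)

lemma det3_R: "x \<in> U \<Longrightarrow> det3 (Y1 x) (Y2 x) (R x) = - dY x"
  unfolding R_def dY_def by (simp add: det3_add3 det3_scale3 det3_neg3 det3_diff3 det3_u det3_v)

lemma indepR: "x \<in> U \<Longrightarrow> lin_indep3 (Y1 x) (Y2 x) (R x)"
  using det3_lin_indep3 det3_R dY_nz by simp

lemma lie_comb3_left:
  fixes a b :: "R3 \<Rightarrow> real"
  assumes "P differentiable (at x)" "a differentiable (at x)" "b differentiable (at x)" "T differentiable (at x)" "x \<in> U"
  shows "lie (\<lambda>y. (P y + a y *\<^sub>R Y1 y) + b y *\<^sub>R Y2 y) T x
     = lie P T x + (a x *\<^sub>R lie Y1 T x - frechet_derivative a (at x) (T x) *\<^sub>R Y1 x)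
                 + (b x *\<^sub>R lie Y2 T x - frechet_derivative b (at x) (T x) *\<^sub>R Y2 x)"
proof -
  note d1 = sm_diff[OF smY1 assms(5)] and d2 = sm_diff[OF smY2 assms(5)]
  have dA: "(\<lambda>y. P y + a y *\<^sub>R Y1 y) differentiable (at x)"
    by (intro differentiable_add differentiable_scaleR assms d1)
  show ?thesis unfolding
    lie_add_left[OF dA differentiable_scaleR[OF assms(3) d2] assms(4)]
    lie_add_left[OF assms(1) differentiable_scaleR[OF assms(2) d1] assms(4)]
    lie_scale_left[OF assms(2) d1 assms(4)] lie_scale_left[OF assms(3) d2 assms(4)] ..
qed

lemma R_unique:
  assumes V: "open V" "V \<subseteq> U" "x \<in> V" and dX: "X3 differentiable (at x)"
    and e: "\<forall>y\<in>V. et y (X3 y) = -1" "et x (lie X3 Y1 x) = 0" "et x (lie X3 Y2 x) = 0"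
  shows "X3 x = R x"
proof -
  have xU: "x \<in> U" using V by auto
  define W where "W y = X3 y - R y" for y
  define a where "a y = det3 (W y) (Y2 y) (Z y) / dY y" for y
  define b where "b y = det3 (Y1 y) (W y) (Z y) / dY y" for y
  have rep: "X3 y = (R y + a y *\<^sub>R Y1 y) + b y *\<^sub>R Y2 y" if "y \<in> V" for y
  proof -
    have yU: "y \<in> U" using that V by auto
    have "W y = a y *\<^sub>R Y1 y + b y *\<^sub>R Y2 y + et y (W y) *\<^sub>R Z y"
      using cramer[OF lin_indep3_det3[OF indepZ[OF yU]], of "W y"] unfolding a_def b_def et_def dY_def by simp
    moreover have "et y (W y) = 0" unfolding W_def et_diff using e(1) that et_R[OF yU] by simp
    ultimately show ?thesis unfolding W_def by (simp add: algebra_simps)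
  qed
  have dW: "W differentiable (at x)" unfolding W_def[abs_def] by (intro differentiable_diff dX sm_diff[OF smR xU])
  have da: "a differentiable (at x)" unfolding a_def[abs_def]
    by (intro differentiable_divide' differentiable_det3 dW sm_diff[OF smY2 xU] sm_diff[OF smZ xU] sm_diff[OF smdY xU] dY_nz xU)
  have db: "b differentiable (at x)" unfolding b_def[abs_def]
    by (intro differentiable_divide' differentiable_det3 dW sm_diff[OF smY1 xU] sm_diff[OF smZ xU] sm_diff[OF smdY xU] dY_nz xU)
  have L: "lie X3 T x = lie (\<lambda>y. (R y + a y *\<^sub>R Y1 y) + b y *\<^sub>R Y2 y) T x" for T
    by (rule lie_cong_open[OF V(1,3)]) (use rep in auto)
  have "et x (lie X3 Y1 x) = b x"
    unfolding L lie_comb3_left[OF sm_diff[OF smR xU] da db sm_diff[OF smY1 xU] xU]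
    by (simp add: et_add et_diff et_scale et_Y1 et_Y2 et_lie_R_Y1[OF xU] lie_self Z_def[symmetric] et_Z[OF xU])
  then have b0: "b x = 0" using e(2) by simp
  have "et x (lie X3 Y2 x) = - a x"
    unfolding L lie_comb3_left[OF sm_diff[OF smR xU] da db sm_diff[OF smY2 xU] xU]
    by (simp add: et_add et_diff et_scale et_neg et_Y1 et_Y2 et_lie_R_Y2[OF xU] lie_self Z_neg et_Z[OF xU])
  then have a0: "a x = 0" using e(3) by simp
  show ?thesis using rep[OF V(3)] a0 b0 by simp
qed

definition dR where "dR y = det3 (Y1 y) (Y2 y) (R y)"
definition C0 where "C0 y = det3 (lie Y1 R y) (Y2 y) (R y) / dR y"
definition K1 where "K1 y = det3 (Y1 y) (lie Y1 R y) (R y) / dR y"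
definition K2 where "K2 y = det3 (lie Y2 R y) (Y2 y) (R y) / dR y"
definition C22 where "C22 y = det3 (Y1 y) (lie Y2 R y) (R y) / dR y"

lemma dR_nz: "y \<in> U \<Longrightarrow> dR y \<noteq> 0" unfolding dR_def using det3_R dY_nz by simp
lemma smdR: "smooth_on U dR" unfolding dR_def by (intro smooth_on_det3 opU smY1 smY2 smR)
lemma smLR1: "smooth_on U (lie Y1 R)" by (intro smooth_on_lie opU smY1 smR)
lemma smLR2: "smooth_on U (lie Y2 R)" by (intro smooth_on_lie opU smY2 smR)

lemma smC: "smooth_on U C0" "smooth_on U K1" "smooth_on U K2" "smooth_on U C22"
  unfolding C0_def[abs_def] K1_def[abs_def] K2_def[abs_def] C22_def[abs_def] using dR_nz
  by (auto intro!: smooth_on_divide smooth_on_det3 opU smY1 smY2 smR smLR1 smLR2 smdR)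

lemma et_lie_Y1_R: "y \<in> U \<Longrightarrow> et y (lie Y1 R y) = 0"
  using et_lie_R_Y1 lie_antisym[of Y1 R y] et_neg by simp
lemma et_lie_Y2_R: "y \<in> U \<Longrightarrow> et y (lie Y2 R y) = 0"
  using et_lie_R_Y2 lie_antisym[of Y2 R y] et_neg by simp

lemma det_zero_of_et: "y \<in> U \<Longrightarrow> et y z = 0 \<Longrightarrow> det3 (Y1 y) (Y2 y) z = 0"
  unfolding et_def using dY_nz by simp

lemma rep_LR1: "y \<in> U \<Longrightarrow> lie Y1 R y = C0 y *\<^sub>R Y1 y + K1 y *\<^sub>R Y2 y"
  using cramer[OF lin_indep3_det3[OF indepR], of y "lie Y1 R y"] det_zero_of_et[OF _ et_lie_Y1_R]
  unfolding C0_def K1_def dR_def by simp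

lemma rep_LR2: "y \<in> U \<Longrightarrow> lie Y2 R y = K2 y *\<^sub>R Y1 y + C22 y *\<^sub>R Y2 y"
  using cramer[OF lin_indep3_det3[OF indepR], of y "lie Y2 R y"] det_zero_of_et[OF _ et_lie_Y2_R]
  unfolding K2_def C22_def dR_def by simp

lemma trace_zero:
  assumes pU: "p \<in> U" shows "C0 p + C22 p = 0"
proof -
  note J = jacobi[OF opU smY1 smY2 smR pU]
  note d1 = sm_diff[OF smY1 pU] and d2 = sm_diff[OF smY2 pU] and dR' = sm_diff[OF smR pU]
  note dC = sm_diff[OF smC(1) pU] sm_diff[OF smC(2) pU] sm_diff[OF smC(3) pU] sm_diff[OF smC(4) pU]
  have dc: "(\<lambda>y. c) differentiable (at p)" for c :: real by simp
  have e1: "et p (lie (lie Y1 Y2) R p) = 0"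
  proof -
    have "lie Y1 Y2 = (\<lambda>y. - Z y)" using Z_neg by (intro ext) simp
    moreover have "lie (\<lambda>y. - Z y) R p = lie (\<lambda>y. (R y + (- \<alpha> y) *\<^sub>R Y1 y) + (- \<beta> y) *\<^sub>R Y2 y) R p"
      by (rule lie_cong_open[OF opU pU]) (auto simp: R_def algebra_simps)
    moreover have "lie (\<lambda>y. (R y + (- \<alpha> y) *\<^sub>R Y1 y) + (- \<beta> y) *\<^sub>R Y2 y) R p
      = lie R R p + ((- \<alpha> p) *\<^sub>R lie Y1 R p - frechet_derivative (\<lambda>y. - \<alpha> y) (at p) (R p) *\<^sub>R Y1 p)
        + ((- \<beta> p) *\<^sub>R lie Y2 R p - frechet_derivative (\<lambda>y. - \<beta> y) (at p) (R p) *\<^sub>R Y2 p)"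
      by (rule lie_comb3_left[OF dR' differentiable_minus[OF sm_diff[OF sm\<alpha> pU]] differentiable_minus[OF sm_diff[OF sm\<beta> pU]] dR' pU])
    ultimately show ?thesis
      by (simp add: et_add et_diff et_scale et_neg et_Y1 et_Y2 lie_self et_lie_Y1_R[OF pU] et_lie_Y2_R[OF pU] et_zero)
  qed
  have e2: "et p (lie (lie Y2 R) Y1 p) = C22 p"
  proof -
    have "lie (lie Y2 R) Y1 p = lie (\<lambda>y. K2 y *\<^sub>R Y1 y + C22 y *\<^sub>R Y2 y) (\<lambda>y. (\<lambda>y. 1) y *\<^sub>R Y1 y + (\<lambda>y. 0) y *\<^sub>R Y2 y) p"
      by (rule lie_cong_open[OF opU pU]) (auto simp: rep_LR2)
    also have "\<dots> = (K2 p * 0 - C22 p * 1) *\<^sub>R lie Y1 Y2 p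
      + (K2 p * frechet_derivative (\<lambda>y. 1) (at p) (Y1 p) + C22 p * frechet_derivative (\<lambda>y. 1) (at p) (Y2 p)
         - 1 * frechet_derivative K2 (at p) (Y1 p) - 0 * frechet_derivative K2 (at p) (Y2 p)) *\<^sub>R Y1 p
      + (K2 p * frechet_derivative (\<lambda>y. 0) (at p) (Y1 p) + C22 p * frechet_derivative (\<lambda>y. 0) (at p) (Y2 p)
         - 1 * frechet_derivative C22 (at p) (Y1 p) - 0 * frechet_derivative C22 (at p) (Y2 p)) *\<^sub>R Y2 p"
      by (rule lie_comb[OF dC(3) dC(4) dc dc d1 d2])
    finally show ?thesis by (simp add: et_add et_diff et_scale et_neg et_Y1 et_Y2 Z_neg et_Z[OF pU])
  qed
  have e3: "et p (lie (lie R Y1) Y2 p) = C0 p"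
  proof -
    have "lie (lie R Y1) Y2 p = lie (\<lambda>y. (- C0 y) *\<^sub>R Y1 y + (- K1 y) *\<^sub>R Y2 y) (\<lambda>y. (\<lambda>y. 0) y *\<^sub>R Y1 y + (\<lambda>y. 1) y *\<^sub>R Y2 y) p"
    proof (rule lie_cong_open[OF opU pU])
      fix y assume "y \<in> U"
      show "lie R Y1 y = (- C0 y) *\<^sub>R Y1 y + (- K1 y) *\<^sub>R Y2 y"
        using lie_antisym[of R Y1 y] rep_LR1[OF \<open>y \<in> U\<close>] by simp
    qed simp
    also have "\<dots> = (- C0 p * 1 - (- K1 p) * 0) *\<^sub>R lie Y1 Y2 p
      + ((- C0 p) * frechet_derivative (\<lambda>y. 0) (at p) (Y1 p) + (- K1 p) * frechet_derivative (\<lambda>y. 0) (at p) (Y2 p)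
         - 0 * frechet_derivative (\<lambda>y. - C0 y) (at p) (Y1 p) - 1 * frechet_derivative (\<lambda>y. - C0 y) (at p) (Y2 p)) *\<^sub>R Y1 p
      + ((- C0 p) * frechet_derivative (\<lambda>y. 1) (at p) (Y1 p) + (- K1 p) * frechet_derivative (\<lambda>y. 1) (at p) (Y2 p)
         - 0 * frechet_derivative (\<lambda>y. - K1 y) (at p) (Y1 p) - 1 * frechet_derivative (\<lambda>y. - K1 y) (at p) (Y2 p)) *\<^sub>R Y2 p"
      by (rule lie_comb[OF differentiable_minus[OF dC(1)] differentiable_minus[OF dC(2)] dc dc d1 d2])
    finally show ?thesis by (simp add: et_add et_diff et_scale et_neg et_Y1 et_Y2 Z_neg et_Z[OF pU])
  qed
  have "et p (lie (lie Y1 Y2) R p + lie (lie Y2 R) Y1 p + lie (lie R Y1) Y2 p) = 0" using J et_zero by simp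
  then show ?thesis using e1 e2 e3 by (simp add: et_add)
qed

end

lemma coords_change:
  assumes li: "lin_indep3 u v w" and ab: "a * a - b * b = 1"
  shows "lin_indep3 (a *\<^sub>R u + b *\<^sub>R v) (b *\<^sub>R u + a *\<^sub>R v) (w + r *\<^sub>R u + s *\<^sub>R v)"
    and "snd (snd (coords (a *\<^sub>R u + b *\<^sub>R v) (b *\<^sub>R u + a *\<^sub>R v) (w + r *\<^sub>R u + s *\<^sub>R v) z)) = snd (snd (coords u v w z))"
proof -
  show li': "lin_indep3 (a *\<^sub>R u + b *\<^sub>R v) (b *\<^sub>R u + a *\<^sub>R v) (w + r *\<^sub>R u + s *\<^sub>R v)"
    unfolding lin_indep3_def
  proof (intro allI impI)
    fix x y c assume "x *\<^sub>R (a *\<^sub>R u + b *\<^sub>R v) + y *\<^sub>R (b *\<^sub>R u + a *\<^sub>R v) + c *\<^sub>R (w + r *\<^sub>R u + s *\<^sub>R v) = 0"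
    then have "(x * a + y * b + c * r) *\<^sub>R u + (x * b + y * a + c * s) *\<^sub>R v + c *\<^sub>R w = 0"
      by (simp add: algebra_simps)
    then have h: "x * a + y * b + c * r = 0" "x * b + y * a + c * s = 0" "c = 0" using li unfolding lin_indep3_def by blast+
    have "x = x * (a * a - b * b)" using ab by simp
    also have "\<dots> = a * (x * a + y * b) - b * (x * b + y * a)" by (simp add: algebra_simps)
    finally have x: "x = 0" using h by simp
    have "y = y * (a * a - b * b)" using ab by simp
    also have "\<dots> = a * (x * b + y * a) - b * (x * a + y * b)" by (simp add: algebra_simps)
    finally have y: "y = 0" using h by simp
    show "x = 0 \<and> y = 0 \<and> c = 0" using x y h by simp
  qed
  obtain A B C where abc: "coords u v w z = (A, B, C)" by (cases "coords u v w z") auto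
  have z: "z = A *\<^sub>R u + B *\<^sub>R v + C *\<^sub>R w" using coords_exists[OF li, of z] abc by simp
  have "z = (a * (A - C * r) - b * (B - C * s)) *\<^sub>R (a *\<^sub>R u + b *\<^sub>R v)
          + (a * (B - C * s) - b * (A - C * r)) *\<^sub>R (b *\<^sub>R u + a *\<^sub>R v) + C *\<^sub>R (w + r *\<^sub>R u + s *\<^sub>R v)"
  proof -
    have "(a * (A - C * r) - b * (B - C * s)) *\<^sub>R (a *\<^sub>R u + b *\<^sub>R v)
          + (a * (B - C * s) - b * (A - C * r)) *\<^sub>R (b *\<^sub>R u + a *\<^sub>R v) + C *\<^sub>R (w + r *\<^sub>R u + s *\<^sub>R v)
        = ((a * a - b * b) * (A - C * r) + C * r) *\<^sub>R u + ((a * a - b * b) * (B - C * s) + C * s) *\<^sub>R v + C *\<^sub>R w"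
      by (simp add: algebra_simps)
    also have "\<dots> = z" unfolding ab z by simp
    finally show ?thesis by simp
  qed
  then show "snd (snd (coords (a *\<^sub>R u + b *\<^sub>R v) (b *\<^sub>R u + a *\<^sub>R v) (w + r *\<^sub>R u + s *\<^sub>R v) z)) = snd (snd (coords u v w z))"
    using coords_unique[OF li'] abc by simp
qed

locale FR = CSL +
  fixes V X1 X2
  assumes fr: "oon_frame U Y1 Y2 V X1 X2"
begin

lemma opV: "open V" and VU: "V \<subseteq> U" and smX1: "smooth_on V X1" and smX2: "smooth_on V X2"
  using fr unfolding oon_frame_def by auto

definition fa where "fa y = det3 (X1 y) (Y2 y) (Z y) / dY y"
definition fb where "fb y = det3 (Y1 y) (X1 y) (Z y) / dY y"

lemma frame_rep:
  assumes "y \<in> V"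
  shows "X1 y = fa y *\<^sub>R Y1 y + fb y *\<^sub>R Y2 y" "X2 y = fb y *\<^sub>R Y1 y + fa y *\<^sub>R Y2 y"
    "fa y > 0" "fa y * fa y - fb y * fb y = 1"
proof -
  have yU: "y \<in> U" using assms VU by auto
  obtain a b c d where h: "X1 y = a *\<^sub>R Y1 y + b *\<^sub>R Y2 y" "X2 y = c *\<^sub>R Y1 y + d *\<^sub>R Y2 y"
      "- a * a + b * b = -1" "- a * c + b * d = 0" "- c * c + d * d = 1" "- a < 0" "d > 0"
    using fr assms unfolding oon_frame_def by blast
  have cd: "c = b \<and> d = a" using ab_unique[OF h(3-7)] .
  have "coords (Y1 y) (Y2 y) (Z y) (X1 y) = (a, b, 0)" using coords_unique[OF indepZ[OF yU], of "X1 y" a b 0] h(1) by simp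
  then have "fa y = a" "fb y = b" using coords_cramer[OF indepZ[OF yU], of "X1 y"] unfolding fa_def fb_def dY_def by auto
  then show "X1 y = fa y *\<^sub>R Y1 y + fb y *\<^sub>R Y2 y" "X2 y = fb y *\<^sub>R Y1 y + fa y *\<^sub>R Y2 y"
    "fa y > 0" "fa y * fa y - fb y * fb y = 1" using h cd by auto
qed

lemma dfa: "y \<in> V \<Longrightarrow> fa differentiable (at y)" and dfb: "y \<in> V \<Longrightarrow> fb differentiable (at y)"
proof -
  assume y: "y \<in> V"
  then have yU: "y \<in> U" using VU by auto
  note d = smooth_on_differentiable[OF smX1 y] sm_diff[OF smY1 yU] sm_diff[OF smY2 yU] sm_diff[OF smZ yU] sm_diff[OF smdY yU]
  show "fa differentiable (at y)" unfolding fa_def[abs_def]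
    by (intro differentiable_divide' differentiable_det3 d dY_nz yU)
  show "fb differentiable (at y)" unfolding fb_def[abs_def]
    by (intro differentiable_divide' differentiable_det3 d dY_nz yU)
qed

lemma fab_deriv: "y \<in> V \<Longrightarrow> fa y * frechet_derivative fa (at y) u = fb y * frechet_derivative fb (at y) u"
proof -
  assume y: "y \<in> V"
  have "frechet_derivative (\<lambda>y. fa y * fa y - fb y * fb y) (at y) u = 0"
    by (rule FD_const_open[OF opV y]) (use frame_rep(4) in auto)
  moreover have "frechet_derivative (\<lambda>y. fa y * fa y - fb y * fb y) (at y) u
    = 2 * (fa y * frechet_derivative fa (at y) u) - 2 * (fb y * frechet_derivative fb (at y) u)"
    unfolding FD_diff[OF differentiable_mult[OF dfa[OF y] dfa[OF y]] differentiable_mult[OF dfb[OF y] dfb[OF y]]]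
      FD_mult[OF dfa[OF y] dfa[OF y]] FD_mult[OF dfb[OF y] dfb[OF y]] by simp
  ultimately show ?thesis by simp
qed

lemma lie_X2_X1:
  assumes y: "y \<in> V"
  shows "\<exists>r s. lie X2 X1 y = Z y + r *\<^sub>R Y1 y + s *\<^sub>R Y2 y"
proof -
  have yU: "y \<in> U" using y VU by auto
  have "lie X2 X1 y = lie (\<lambda>y. fb y *\<^sub>R Y1 y + fa y *\<^sub>R Y2 y) (\<lambda>y. fa y *\<^sub>R Y1 y + fb y *\<^sub>R Y2 y) y"
    by (rule lie_cong_open[OF opV y]) (use frame_rep in auto)
  moreover have "\<exists>r s. lie (\<lambda>y. fb y *\<^sub>R Y1 y + fa y *\<^sub>R Y2 y) (\<lambda>y. fa y *\<^sub>R Y1 y + fb y *\<^sub>R Y2 y) y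
     = (fb y * fb y - fa y * fa y) *\<^sub>R lie Y1 Y2 y + r *\<^sub>R Y1 y + s *\<^sub>R Y2 y"
    using lie_comb[OF dfb[OF y] dfa[OF y] dfa[OF y] dfb[OF y] sm_diff[OF smY1 yU] sm_diff[OF smY2 yU]] by blast
  moreover have "(fb y * fb y - fa y * fa y) *\<^sub>R lie Y1 Y2 y = Z y"
  proof -
    have "fb y * fb y - fa y * fa y = -1" using frame_rep(4)[OF y] by simp
    then show ?thesis using Z_neg by simp
  qed
  ultimately show ?thesis by metis
qed

lemma eta_X: "y \<in> V \<Longrightarrow> eta X1 X2 y z = et y z"
proof -
  assume y: "y \<in> V"
  have yU: "y \<in> U" using y VU by auto
  obtain r s where rs: "lie X2 X1 y = Z y + r *\<^sub>R Y1 y + s *\<^sub>R Y2 y" using lie_X2_X1[OF y] by blast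
  have "eta X1 X2 y z = snd (snd (coords (Y1 y) (Y2 y) (Z y) z))"
    unfolding eta_def rs frame_rep(1,2)[OF y] using coords_change(2)[OF indepZ[OF yU] frame_rep(4)[OF y]] by simp
  also have "\<dots> = et y z" using coords_cramer[OF indepZ[OF yU]] unfolding et_def dY_def by simp
  finally show ?thesis .
qed

lemma et_X1: "y \<in> V \<Longrightarrow> et y (X1 y) = 0" and et_X2: "y \<in> V \<Longrightarrow> et y (X2 y) = 0"
  using frame_rep by (simp_all add: et_add et_scale et_Y1 et_Y2)

lemma lie_T_X:
  assumes x: "x \<in> V" and dT: "T differentiable (at x)"
  shows "lie T X1 x = (fa x *\<^sub>R lie T Y1 x + frechet_derivative fa (at x) (T x) *\<^sub>R Y1 x)
                    + (fb x *\<^sub>R lie T Y2 x + frechet_derivative fb (at x) (T x) *\<^sub>R Y2 x)"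
    and "lie T X2 x = (fb x *\<^sub>R lie T Y1 x + frechet_derivative fb (at x) (T x) *\<^sub>R Y1 x)
                    + (fa x *\<^sub>R lie T Y2 x + frechet_derivative fa (at x) (T x) *\<^sub>R Y2 x)"
proof -
  have xU: "x \<in> U" using x VU by auto
  note d1 = sm_diff[OF smY1 xU] and d2 = sm_diff[OF smY2 xU]
  have "lie T X1 x = lie T (\<lambda>y. fa y *\<^sub>R Y1 y + fb y *\<^sub>R Y2 y) x"
    by (rule lie_cong_open[OF opV x]) (use frame_rep in auto)
  then show "lie T X1 x = (fa x *\<^sub>R lie T Y1 x + frechet_derivative fa (at x) (T x) *\<^sub>R Y1 x)
                    + (fb x *\<^sub>R lie T Y2 x + frechet_derivative fb (at x) (T x) *\<^sub>R Y2 x)"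
    unfolding lie_add_right[OF dT differentiable_scaleR[OF dfa[OF x] d1] differentiable_scaleR[OF dfb[OF x] d2]]
      lie_scale_right[OF dfa[OF x] dT d1] lie_scale_right[OF dfb[OF x] dT d2] .
  have "lie T X2 x = lie T (\<lambda>y. fb y *\<^sub>R Y1 y + fa y *\<^sub>R Y2 y) x"
    by (rule lie_cong_open[OF opV x]) (use frame_rep in auto)
  then show "lie T X2 x = (fb x *\<^sub>R lie T Y1 x + frechet_derivative fb (at x) (T x) *\<^sub>R Y1 x)
                    + (fa x *\<^sub>R lie T Y2 x + frechet_derivative fa (at x) (T x) *\<^sub>R Y2 x)"
    unfolding lie_add_right[OF dT differentiable_scaleR[OF dfb[OF x] d1] differentiable_scaleR[OF dfa[OF x] d2]]
      lie_scale_right[OF dfb[OF x] dT d1] lie_scale_right[OF dfa[OF x] dT d2] .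
qed

lemma deta_X:
  assumes x: "x \<in> V" and dT: "T differentiable (at x)" and e: "\<forall>y\<in>V. et y (T y) = -1"
  shows "deta X1 X2 T X1 x = - (fa x * et x (lie T Y1 x) + fb x * et x (lie T Y2 x))"
    and "deta X1 X2 T X2 x = - (fb x * et x (lie T Y1 x) + fa x * et x (lie T Y2 x))"
proof -
  have z1: "frechet_derivative (\<lambda>y. eta X1 X2 y (X1 y)) (at x) u = 0" for u
    by (rule FD_const_open[OF opV x]) (simp add: eta_X et_X1)
  have z2: "frechet_derivative (\<lambda>y. eta X1 X2 y (X2 y)) (at x) u = 0" for u
    by (rule FD_const_open[OF opV x]) (simp add: eta_X et_X2)
  have z3: "frechet_derivative (\<lambda>y. eta X1 X2 y (T y)) (at x) u = 0" for u
    by (rule FD_const_open[OF opV x]) (simp add: eta_X e)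
  show "deta X1 X2 T X1 x = - (fa x * et x (lie T Y1 x) + fb x * et x (lie T Y2 x))"
    unfolding deta_def z1 z3 eta_X[OF x] lie_T_X(1)[OF x dT]
    by (simp add: et_add et_scale et_Y1 et_Y2)
  show "deta X1 X2 T X2 x = - (fb x * et x (lie T Y1 x) + fa x * et x (lie T Y2 x))"
    unfolding deta_def z2 z3 eta_X[OF x] lie_T_X(2)[OF x dT]
    by (simp add: et_add et_scale et_Y1 et_Y2)
qed

definition RV where "RV y = (if y \<in> V then R y else 0)"

lemma RV_V: "y \<in> V \<Longrightarrow> RV y = R y" unfolding RV_def by simp

lemma X3of_eq: "X3of V X1 X2 = RV"
  unfolding X3of_def
proof (rule the_equality)
  have smRV: "smooth_on V RV"
    using smooth_on_cong[OF opV, of R RV] smooth_on_subset[OF smR VU] RV_V by simp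
  show "smooth_on V RV \<and> (\<forall>x. x \<notin> V \<longrightarrow> RV x = 0) \<and>
    (\<forall>x\<in>V. eta X1 X2 x (RV x) = - 1 \<and> deta X1 X2 RV X1 x = 0 \<and> deta X1 X2 RV X2 x = 0)"
  proof (intro conjI allI ballI impI smRV)
    fix x assume "x \<notin> V" then show "RV x = 0" unfolding RV_def by simp
  next
    fix x assume x: "x \<in> V"
    have xU: "x \<in> U" using x VU by auto
    have e: "\<forall>y\<in>V. et y (RV y) = -1" using et_R VU RV_V by auto
    have dRV: "RV differentiable (at x)" using smooth_on_differentiable[OF smRV x] .
    have l: "lie RV T x = lie R T x" for T by (rule lie_cong_open[OF opV x]) (auto simp: RV_V)
    show "eta X1 X2 x (RV x) = - 1" using eta_X[OF x] e x by simp
    show "deta X1 X2 RV X1 x = 0" "deta X1 X2 RV X2 x = 0"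
      unfolding deta_X[OF x dRV e] l using et_lie_R_Y1[OF xU] et_lie_R_Y2[OF xU] by simp_all
  qed
next
  fix X3 assume P: "smooth_on V X3 \<and> (\<forall>x. x \<notin> V \<longrightarrow> X3 x = 0) \<and>
    (\<forall>x\<in>V. eta X1 X2 x (X3 x) = - 1 \<and> deta X1 X2 X3 X1 x = 0 \<and> deta X1 X2 X3 X2 x = 0)"
  show "X3 = RV"
  proof
    fix x show "X3 x = RV x"
    proof (cases "x \<in> V")
      case False then show ?thesis using P unfolding RV_def by simp
    next
      case x: True
      have e: "\<forall>y\<in>V. et y (X3 y) = -1" using P eta_X by auto
      have dX: "X3 differentiable (at x)" using smooth_on_differentiable[OF conjunct1[OF P] x] .
      define u where "u = et x (lie X3 Y1 x)"
      define v where "v = et x (lie X3 Y2 x)"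
      have h1: "fa x * u + fb x * v = 0" and h2: "fb x * u + fa x * v = 0"
        using P deta_X[OF x dX e] x unfolding u_def v_def by auto
      have "u = u * (fa x * fa x - fb x * fb x)" using frame_rep(4)[OF x] by simp
      also have "\<dots> = fa x * (fa x * u + fb x * v) - fb x * (fb x * u + fa x * v)" by (simp add: algebra_simps)
      finally have u0: "u = 0" using h1 h2 by simp
      have "v = v * (fa x * fa x - fb x * fb x)" using frame_rep(4)[OF x] by simp
      also have "\<dots> = fa x * (fb x * u + fa x * v) - fb x * (fa x * u + fb x * v)" by (simp add: algebra_simps)
      finally have v0: "v = 0" using h1 h2 by simp
      have "X3 x = R x" using R_unique[OF opV VU x dX e] u0 v0 unfolding u_def v_def by simp
      then show ?thesis using RV_V[OF x] by simp
    qed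
  qed
qed

definition hA where "hA p = fa p * fa p + fb p * fb p"
definition hB where "hB p = 2 * fa p * fb p"
definition b0 where "b0 p = (K1 p - K2 p) / 2"

lemma hmat_form:
  assumes p: "p \<in> V"
  shows "hmat V X1 X2 p = mat2 (hA p * C0 p - hB p * b0 p) (hA p * b0 p - hB p * C0 p)
                            (- (hA p * b0 p - hB p * C0 p)) (- (hA p * C0 p - hB p * b0 p))"
proof -
  have pU: "p \<in> U" using p VU by auto
  define a where "a = fa p" define b where "b = fb p"
  define da where "da = frechet_derivative fa (at p) (R p)"
  define db where "db = frechet_derivative fb (at p) (R p)"
  have ab: "a * a - b * b = 1" unfolding a_def b_def using frame_rep(4)[OF p] .
  have dd: "a * da = b * db" unfolding a_def b_def da_def db_def using fab_deriv[OF p] .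
  have tr: "C22 p = - C0 p" using trace_zero[OF pU] by simp
  note dR' = sm_diff[OF smR pU]
  have l: "lie T RV p = lie T R p" for T by (rule lie_cong_open[OF opV p]) (auto simp: RV_V)
  define P1 where "P1 = a * C0 p + b * K2 p - da"
  define Q1 where "Q1 = a * K1 p + b * C22 p - db"
  define P2 where "P2 = b * C0 p + a * K2 p - db"
  define Q2 where "Q2 = b * K1 p + a * C22 p - da"
  have L1: "lie X1 R p = P1 *\<^sub>R Y1 p + Q1 *\<^sub>R Y2 p"
  proof -
    have "lie X1 R p = - lie R X1 p" by (rule lie_antisym)
    also have "\<dots> = P1 *\<^sub>R Y1 p + Q1 *\<^sub>R Y2 p"
      unfolding lie_T_X(1)[OF p dR'] lie_antisym[of R Y1] lie_antisym[of R Y2] rep_LR1[OF pU] rep_LR2[OF pU]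
        P1_def Q1_def a_def b_def da_def db_def
      by (simp add: algebra_simps)
    finally show ?thesis .
  qed
  have L2: "lie X2 R p = P2 *\<^sub>R Y1 p + Q2 *\<^sub>R Y2 p"
  proof -
    have "lie X2 R p = - lie R X2 p" by (rule lie_antisym)
    also have "\<dots> = P2 *\<^sub>R Y1 p + Q2 *\<^sub>R Y2 p"
      unfolding lie_T_X(2)[OF p dR'] lie_antisym[of R Y1] lie_antisym[of R Y2] rep_LR1[OF pU] rep_LR2[OF pU]
        P2_def Q2_def a_def b_def da_def db_def
      by (simp add: algebra_simps)
    finally show ?thesis .
  qed
  have X12: "X1 p = a *\<^sub>R Y1 p + b *\<^sub>R Y2 p" "X2 p = b *\<^sub>R Y1 p + a *\<^sub>R Y2 p"
    unfolding a_def b_def using frame_rep[OF p] by auto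
  have li: "lin_indep3 (X1 p) (X2 p) (R p)"
    using coords_change(1)[OF indepR[OF pU] ab, of 0 0] X12 by simp
  have co: "coords (X1 p) (X2 p) (R p) (P *\<^sub>R Y1 p + Q *\<^sub>R Y2 p) = (a * P - b * Q, a * Q - b * P, 0)" for P Q
  proof (rule coords_unique[OF li])
    have "(a * P - b * Q) *\<^sub>R X1 p + (a * Q - b * P) *\<^sub>R X2 p + 0 *\<^sub>R R p
        = ((a * a - b * b) * P) *\<^sub>R Y1 p + ((a * a - b * b) * Q) *\<^sub>R Y2 p"
      unfolding X12 by (simp add: algebra_simps)
    then show "P *\<^sub>R Y1 p + Q *\<^sub>R Y2 p = (a * P - b * Q) *\<^sub>R X1 p + (a * Q - b * P) *\<^sub>R X2 p + 0 *\<^sub>R R p"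
      using ab by simp
  qed
  have h: "hmat V X1 X2 p = mat2 (a * P1 - b * Q1) (((a * Q1 - b * P1) - (a * P2 - b * Q2)) / 2)
      (((a * P2 - b * Q2) - (a * Q1 - b * P1)) / 2) (- (a * P1 - b * Q1))"
    unfolding hmat_def Let_def X3of_eq RV_V[OF p] l L1 L2 co by simp
  have e1: "a * P1 - b * Q1 = hA p * C0 p - hB p * b0 p"
  proof -
    have "a * P1 - b * Q1 = (a * a + b * b) * C0 p - a * b * (K1 p - K2 p) - (a * da - b * db)"
      unfolding P1_def Q1_def tr by (simp add: algebra_simps)
    then show ?thesis unfolding hA_def hB_def b0_def a_def[symmetric] b_def[symmetric] using dd by simp
  qed
  have e2: "((a * Q1 - b * P1) - (a * P2 - b * Q2)) / 2 = hA p * b0 p - hB p * C0 p"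
  proof -
    have "(a * Q1 - b * P1) - (a * P2 - b * Q2) = (a * a + b * b) * (K1 p - K2 p) - 4 * a * b * C0 p"
      unfolding P1_def Q1_def P2_def Q2_def tr by (simp add: algebra_simps)
    then show ?thesis unfolding hA_def hB_def b0_def a_def[symmetric] b_def[symmetric] by (simp add: field_simps)
  qed
  have e3: "((a * P2 - b * Q2) - (a * Q1 - b * P1)) / 2 = - (hA p * b0 p - hB p * C0 p)"
    using e2 by simp
  show ?thesis unfolding h e1 e2 e3 ..
qed

end

lemma mat2_nth: "mat2 a b c d $ 1 $ 1 = a" "mat2 a b c d $ 1 $ 2 = b" "mat2 a b c d $ 2 $ 1 = c" "mat2 a b c d $ 2 $ 2 = d"
  unfolding mat2_def by simp_all

lemma mat2_eq: "mat2 a b c d = mat2 a' b' c' d' \<longleftrightarrow> a = a' \<and> b = b' \<and> c = c' \<and> d = d'"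
proof
  assume "mat2 a b c d = mat2 a' b' c' d'"
  then show "a = a' \<and> b = b' \<and> c = c' \<and> d = d'" using mat2_nth by metis
qed simp

lemma mat2_zero: "mat2 0 0 0 0 = 0"
  unfolding vec_eq_iff by (simp add: forall_2 mat2_nth)

lemma det_mat2: "det (mat2 a b c d) = a * d - b * c"
  unfolding det_2 mat2_nth ..

definition NFuw :: "real \<Rightarrow> real \<Rightarrow> bool" where
  "NFuw u w \<longleftrightarrow> (u * w = 0 \<longrightarrow> (u = 0 \<and> w = 0) \<or> (w = 0 \<and> (u = 2 \<or> u = -2)) \<or> (u = 0 \<and> (w = 2 \<or> w = -2))) \<and>
     (u * w < 0 \<longrightarrow> u = - w \<and> u \<noteq> 0) \<and> (u * w > 0 \<longrightarrow> u = w \<and> u \<noteq> 0)"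

lemma nf_mat: "normal_form (mat2 c b (- b) (- c)) \<longleftrightarrow> NFuw (c + b) (c - b)"
proof -
  have d: "det (mat2 c b (- b) (- c)) = - ((c + b) * (c - b))" unfolding det_mat2 by (simp add: algebra_simps)
  have set: "mat2 c b (- b) (- c) \<in> {mat2 0 0 0 0, mat2 1 1 (-1) (-1), mat2 1 (-1) 1 (-1), mat2 (-1) 1 (-1) 1, mat2 (-1) (-1) 1 1}
    \<longleftrightarrow> (c = 0 \<and> b = 0) \<or> (c = 1 \<and> b = 1) \<or> (c = 1 \<and> b = -1) \<or> (c = -1 \<and> b = 1) \<or> (c = -1 \<and> b = -1)"
    by (auto simp: mat2_eq)
  have pos: "(\<exists>k. k \<noteq> 0 \<and> mat2 c b (- b) (- c) = mat2 0 k (- k) 0) \<longleftrightarrow> c = 0 \<and> b \<noteq> 0"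
    by (auto simp: mat2_eq)
  have neg: "(\<exists>k. k \<noteq> 0 \<and> mat2 c b (- b) (- c) = mat2 k 0 0 (- k)) \<longleftrightarrow> b = 0 \<and> c \<noteq> 0"
    by (auto simp: mat2_eq)
  show ?thesis unfolding normal_form_def d set pos neg NFuw_def
    by (smt (verit) mult_eq_0_iff mult_neg_neg mult_pos_pos zero_less_mult_iff)
qed

lemma exist_t: "\<exists>t>0. NFuw (u / t) (t * w)"
proof (cases "u * w = 0")
  case True
  show ?thesis
  proof (cases "u = 0")
    case u: True
    show ?thesis
    proof (cases "w = 0")
      case True then show ?thesis using u by (intro exI[of _ 1]) (simp add: NFuw_def)
    next
      case False
      have "(2 / \<bar>w\<bar>) * w = 2 \<or> (2 / \<bar>w\<bar>) * w = -2" using False by (cases "w > 0") (auto simp: field_simps)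
      then show ?thesis using u False by (intro exI[of _ "2 / \<bar>w\<bar>"]) (auto simp: NFuw_def)
    qed
  next
    case False
    then have w: "w = 0" using True by simp
    have "u / (\<bar>u\<bar> / 2) = 2 \<or> u / (\<bar>u\<bar> / 2) = -2" using False by (cases "u > 0") (auto simp: field_simps)
    then show ?thesis using w False by (intro exI[of _ "\<bar>u\<bar> / 2"]) (auto simp: NFuw_def)
  qed
next
  case False
  then have u: "u \<noteq> 0" and w: "w \<noteq> 0" by auto
  define q where "q = \<bar>u / w\<bar>"
  have q: "q > 0" unfolding q_def using u w by simp
  define t where "t = sqrt q"
  have t: "t > 0" "t * t = q" unfolding t_def using q by auto
  have prod: "(u / t) * (t * w) = u * w" using t by (simp add: field_simps)
  show ?thesis
  proof (intro exI[of _ t] conjI t(1))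
    have A: "u / t = - (t * w) \<and> u / t \<noteq> 0" if neg: "u * w < 0"
    proof -
      have "q = - (u / w)" unfolding q_def using neg by (simp add: abs_if divide_less_0_iff mult_less_0_iff)
      then have "u = - (t * t) * w" using t w by (simp add: field_simps)
      then show "u / t = - (t * w) \<and> u / t \<noteq> 0" using t u by (simp add: field_simps)
    qed
    have B: "u / t = t * w \<and> u / t \<noteq> 0" if pos: "u * w > 0"
    proof -
      have "u / w > 0" using pos by (simp add: zero_less_divide_iff zero_less_mult_iff)
      then have "q = u / w" unfolding q_def by (metis abs_of_pos)
      then have "u = (t * t) * w" using t w by (simp add: field_simps)
      then show "u / t = t * w \<and> u / t \<noteq> 0" using t u by (simp add: field_simps)
    qed
    show "NFuw (u / t) (t * w)" unfolding NFuw_def prod using A B False by auto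
  qed
qed

lemma unique_t:
  assumes nz: "\<not> (u = 0 \<and> w = 0)" and t: "t1 > 0" "t2 > 0"
    and n1: "NFuw (u / t1) (t1 * w)" and n2: "NFuw (u / t2) (t2 * w)"
  shows "t1 = t2"
proof -
  have prod: "(u / t) * (t * w) = u * w" if "t > 0" for t using that by (simp add: field_simps)
  have key: "\<exists>K. t * t = K \<and> (\<forall>t'. t' > 0 \<longrightarrow> NFuw (u / t') (t' * w) \<longrightarrow> t' * t' = K)" if "t > 0" "NFuw (u / t) (t * w)" for t
  proof (cases "u * w < 0")
    case True
    have sq: "t' * t' = - u / w" if "t' > 0" "NFuw (u / t') (t' * w)" for t'
    proof -
      have "u / t' = - (t' * w)" using that True prod[OF that(1)] unfolding NFuw_def by auto
      then have "u = - (t' * t') * w" using that(1) by (simp add: field_simps)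
      moreover have "w \<noteq> 0" using True by auto
      ultimately show ?thesis by (simp add: field_simps)
    qed
    show ?thesis using sq that by blast
  next
    case F1: False
    show ?thesis
    proof (cases "u * w > 0")
      case True
      have sq: "t' * t' = u / w" if "t' > 0" "NFuw (u / t') (t' * w)" for t'
      proof -
        have "u / t' = t' * w" using that True prod[OF that(1)] unfolding NFuw_def by auto
        then have "u = (t' * t') * w" using that(1) by (simp add: field_simps)
        moreover have "w \<noteq> 0" using True by auto
        ultimately show ?thesis by (simp add: field_simps)
      qed
      show ?thesis using sq that by blast
    next
      case False
      then have uw0: "u * w = 0" using F1 by simp
      show ?thesis
      proof (cases "u = 0")
        case u: True
        then have w: "w \<noteq> 0" using nz by simp
        have sq: "t' * t' = (2 / \<bar>w\<bar>) * (2 / \<bar>w\<bar>)" if "t' > 0" "NFuw (u / t') (t' * w)" for t'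
        proof -
          have "t' * w = 2 \<or> t' * w = -2" using that u w prod[OF that(1)] uw0 unfolding NFuw_def by auto
          then have "\<bar>t' * w\<bar> = 2" by auto
          then have eq: "t' = 2 / \<bar>w\<bar>" using that(1) w by (simp add: abs_mult field_simps)
          show ?thesis unfolding eq ..
        qed
        show ?thesis using sq that by blast
      next
        case u: False
        then have w: "w = 0" using uw0 by simp
        have sq: "t' * t' = (\<bar>u\<bar> / 2) * (\<bar>u\<bar> / 2)" if "t' > 0" "NFuw (u / t') (t' * w)" for t'
        proof -
          have "u / t' = 2 \<or> u / t' = -2" using that u w prod[OF that(1)] uw0 unfolding NFuw_def by auto
          then have eq: "t' = \<bar>u\<bar> / 2" using that(1) by (auto simp: field_simps)
          show ?thesis unfolding eq ..
        qed
        show ?thesis using sq that by blast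
      qed
    qed
  qed
  obtain K where K: "t1 * t1 = K" "\<And>t'. t' > 0 \<Longrightarrow> NFuw (u / t') (t' * w) \<Longrightarrow> t' * t' = K"
    using key[OF t(1) n1] by blast
  have eq: "t1 * t1 = t2 * t2" using K(1) K(2)[OF t(2) n2] by simp
  have "\<not> t1 < t2" using mult_strict_mono[of t1 t2 t1 t2] t eq by auto
  moreover have "\<not> t2 < t1" using mult_strict_mono[of t2 t1 t2 t1] t eq by auto
  ultimately show ?thesis by linarith
qed

context FR begin

lemma s_pos: "p \<in> V \<Longrightarrow> fa p + fb p > 0"
proof -
  assume p: "p \<in> V"
  have "fb p * fb p < fa p * fa p" using frame_rep(4)[OF p] by simp
  then have "\<bar>fb p\<bar> < fa p" using frame_rep(3)[OF p] by (metis abs_mult_self abs_of_pos mult_strict_mono' abs_ge_zero less_le_not_le linorder_not_less mult_mono')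
  then show ?thesis by linarith
qed

lemma s_inv: "p \<in> V \<Longrightarrow> (fa p - fb p) * (fa p + fb p) = 1"
  using frame_rep(4) by (simp add: algebra_simps)

lemma frame_NF:
  assumes p: "p \<in> V"
  shows "normal_form (hmat V X1 X2 p) \<longleftrightarrow>
     NFuw ((C0 p + (K1 p - K2 p) / 2) / ((fa p + fb p) * (fa p + fb p)))
          (((fa p + fb p) * (fa p + fb p)) * (C0 p - (K1 p - K2 p) / 2))"
proof -
  define s where "s = fa p + fb p"
  have s: "s > 0" "(fa p - fb p) * s = 1" unfolding s_def using s_pos[OF p] s_inv[OF p] by auto
  have m: "fa p - fb p = 1 / s" using s by (simp add: field_simps)
  have e1: "(hA p * C0 p - hB p * b0 p) + (hA p * b0 p - hB p * C0 p) = (C0 p + (K1 p - K2 p) / 2) / (s * s)"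
  proof -
    have "(hA p * C0 p - hB p * b0 p) + (hA p * b0 p - hB p * C0 p) = ((fa p - fb p) * (fa p - fb p)) * (C0 p + b0 p)"
      unfolding hA_def hB_def by (simp add: algebra_simps)
    also have "\<dots> = (1 / (s * s)) * (C0 p + b0 p)" unfolding m by simp
    finally show ?thesis unfolding b0_def by simp
  qed
  have e2: "(hA p * C0 p - hB p * b0 p) - (hA p * b0 p - hB p * C0 p) = (s * s) * (C0 p - (K1 p - K2 p) / 2)"
    unfolding hA_def hB_def b0_def s_def by (simp add: algebra_simps)
  show ?thesis unfolding hmat_form[OF p] nf_mat e1 e2 s_def ..
qed

lemma hmat_zero: "p \<in> V \<Longrightarrow> C0 p + (K1 p - K2 p) / 2 = 0 \<Longrightarrow> C0 p - (K1 p - K2 p) / 2 = 0 \<Longrightarrow> hmat V X1 X2 p = 0"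
proof -
  assume p: "p \<in> V" and h: "C0 p + (K1 p - K2 p) / 2 = 0" "C0 p - (K1 p - K2 p) / 2 = 0"
  then have "C0 p = 0" "b0 p = 0" unfolding b0_def by linarith+
  then show ?thesis unfolding hmat_form[OF p] using mat2_zero by simp
qed

end

context CSL begin

lemma FR_I: "oon_frame U Y1 Y2 V X1 X2 \<Longrightarrow> FR U Y1 Y2 V X1 X2"
  unfolding FR_def FR_axioms_def CSL_def using csl by simp

lemma main_exist:
  assumes pU: "p \<in> U"
  shows "\<exists>V X1 X2. p \<in> V \<and> oon_frame U Y1 Y2 V X1 X2 \<and> normal_form (hmat V X1 X2 p)"
proof -
  define u0 where "u0 = C0 p + (K1 p - K2 p) / 2"
  define w0 where "w0 = C0 p - (K1 p - K2 p) / 2"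
  obtain t where t: "t > 0" "NFuw (u0 / t) (t * w0)" using exist_t by blast
  define s where "s = sqrt t"
  have s: "s > 0" "s * s = t" unfolding s_def using t by auto
  define a where "a = (s + 1 / s) / 2"
  define b where "b = (s - 1 / s) / 2"
  have ab: "a > 0" "a * a - b * b = 1" "a + b = s" unfolding a_def b_def using s
    by (auto simp: field_simps add_pos_pos)
  define X1 where "X1 = (\<lambda>y. a *\<^sub>R Y1 y + b *\<^sub>R Y2 y)"
  define X2 where "X2 = (\<lambda>y. b *\<^sub>R Y1 y + a *\<^sub>R Y2 y)"
  have fr: "oon_frame U Y1 Y2 U X1 X2"
    unfolding oon_frame_def
  proof (intro conjI opU subset_refl ballI)
    show "smooth_on U X1" unfolding X1_def by (intro smooth_on_add smooth_on_scaleR smooth_on_const opU smY1 smY2)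
    show "smooth_on U X2" unfolding X2_def by (intro smooth_on_add smooth_on_scaleR smooth_on_const opU smY1 smY2)
    fix x assume "x \<in> U"
    show "\<exists>a' b' c d. X1 x = a' *\<^sub>R Y1 x + b' *\<^sub>R Y2 x \<and> X2 x = c *\<^sub>R Y1 x + d *\<^sub>R Y2 x \<and>
        - a' * a' + b' * b' = -1 \<and> - a' * c + b' * d = 0 \<and> - c * c + d * d = 1 \<and> - a' < 0 \<and> d > 0"
      by (rule exI[of _ a], rule exI[of _ b], rule exI[of _ b], rule exI[of _ a])
         (use ab in \<open>auto simp: X1_def X2_def algebra_simps\<close>)
  qed
  interpret F: FR U Y1 Y2 U X1 X2 by (rule FR_I[OF fr])
  have "(F.fa p - a) *\<^sub>R Y1 p + (F.fb p - b) *\<^sub>R Y2 p = 0"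
    using F.frame_rep(1)[OF pU] unfolding X1_def by (simp add: algebra_simps)
  then have "F.fa p = a" "F.fb p = b"
    using indepZ[OF pU, unfolded lin_indep3_def, rule_format, of "F.fa p - a" "F.fb p - b" 0] by auto
  then have "normal_form (hmat U X1 X2 p)"
    unfolding F.frame_NF[OF pU] using t u0_def w0_def by (simp add: ab(3) s(2))
  then show ?thesis using pU fr by blast
qed

lemma main_unique:
  assumes pV: "p \<in> V" and f: "oon_frame U Y1 Y2 V X1 X2" and n: "normal_form (hmat V X1 X2 p)"
    and pV': "p \<in> V'" and f': "oon_frame U Y1 Y2 V' X1' X2'" and n': "normal_form (hmat V' X1' X2' p)"
    and nz: "hmat V X1 X2 p \<noteq> 0"
  shows "X1 p = X1' p \<and> X2 p = X2' p"
proof -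
  interpret F: FR U Y1 Y2 V X1 X2 by (rule FR_I[OF f])
  interpret G: FR U Y1 Y2 V' X1' X2' by (rule FR_I[OF f'])
  define u0 where "u0 = C0 p + (K1 p - K2 p) / 2"
  define w0 where "w0 = C0 p - (K1 p - K2 p) / 2"
  have uw: "\<not> (u0 = 0 \<and> w0 = 0)" using F.hmat_zero[OF pV] nz unfolding u0_def w0_def by blast
  define s where "s = F.fa p + F.fb p"
  define s' where "s' = G.fa p + G.fb p"
  have s: "s > 0" "s' > 0" unfolding s_def s'_def using F.s_pos[OF pV] G.s_pos[OF pV'] by auto
  have "s * s = s' * s'"
    using unique_t[OF uw[unfolded u0_def w0_def] _ _ F.frame_NF[OF pV, THEN iffD1, OF n] G.frame_NF[OF pV', THEN iffD1, OF n']] s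
    unfolding s_def s'_def by (simp add: mult_pos_pos)
  then have ss: "s = s'"
  proof -
    assume eq: "s * s = s' * s'"
    have "\<not> s < s'" using mult_strict_mono[of s s' s s'] s eq by auto
    moreover have "\<not> s' < s" using mult_strict_mono[of s' s s' s] s eq by auto
    ultimately show ?thesis by linarith
  qed
  have "(F.fa p - F.fb p) * s = 1" "(G.fa p - G.fb p) * s' = 1"
    unfolding s_def s'_def using F.s_inv[OF pV] G.s_inv[OF pV'] by auto
  then have "F.fa p - F.fb p = G.fa p - G.fb p" using ss s by (metis mult_right_cancel less_irrefl)
  then have "F.fa p = G.fa p" "F.fb p = G.fb p" using ss unfolding s_def s'_def by linarith+
  then show ?thesis using F.frame_rep(1,2)[OF pV] G.frame_rep(1,2)[OF pV'] by simp
qed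

end

theorem mainTheorem7:
  fixes U :: "R3 set" and Y1 Y2 :: "R3 \<Rightarrow> R3" and p :: R3
  assumes "contact_subLorentzian U Y1 Y2" and "p \<in> U"
  shows "(\<exists>V X1 X2. p \<in> V \<and> oon_frame U Y1 Y2 V X1 X2 \<and> normal_form (hmat V X1 X2 p))
       \<and> (\<forall>V X1 X2 V' X1' X2'.
            p \<in> V \<and> oon_frame U Y1 Y2 V X1 X2 \<and> normal_form (hmat V X1 X2 p) \<and>
            p \<in> V' \<and> oon_frame U Y1 Y2 V' X1' X2' \<and> normal_form (hmat V' X1' X2' p) \<and>
            hmat V X1 X2 p \<noteq> 0
            \<longrightarrow> X1 p = X1' p \<and> X2 p = X2' p)"
proof -
  interpret CSL U Y1 Y2 by (unfold_locales) (rule assms(1))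
  show ?thesis using main_exist[OF assms(2)] main_unique by blast
qed

end
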